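(* For the RHA process, all $n\ge1$ and $j\ge1$, $$H(X^n_j)\ge\max_{l}\Big(\log\binom{k_{l-1}^2}{k_l}-\log\binom{k_{l-1}^2-2^{n-l}}{k_l-2^{n-l}}\Big)P(A_{nl}),$$ where the maximum ranges over $l\in\{1,\dots,n\}$ with $k_l\ge2^{n-l}$, and $A_{nl}$ is the event that the $2^{n-l}$ consecutive length-$2^l$ blocks $X^l_{2^{n-l}},\dots,X^l_{2^{n-l+1}-1}$ composing $X^n_1$ are pairwise distinct.
   Context: Random hierarchical association (RHA) process. Fix positive integers $(k_n)_{n\ge0}$ (perplexities) with $k_{n-1}\le k_n\le k_{n-1}^2$ for all $n\ge1$. On a probability space $(\Omega,\mathcal J,P)$ let, for each $n\ge1$, $(L_{nj},R_{nj})_{j=1}^{k_n}$ be the lexicographically sorted enumeration of a uniformly random $k_n$-element subset of $\{1,\dots,k_{n-1}\}^2$ (each of the $\binom{k_{n-1}^2}{k_n}$ subsets equally likely), independently over $n$. Let $(C_n)_{n\ge0}$ be independent, independent of all $(L_{nj},R_{nj})$, with $C_n$ uniform on $\{1,\dots,k_n\}$. Define strings $Y^0_j=j$ (length 1) for $1\le j\le k_0$ and $Y^n_j=Y^{n-1}_{L_{nj}}Y^{n-1}_{R_{nj}}$ (concatenation). The RHA process is $\mathcal X=Y^0_{C_0}Y^1_{C_1}Y^2_{C_2}\cdots=X_1X_2X_3\cdots$, $X_{k:l}=X_k\cdots X_l$; for $n\ge0$, $j\ge1$, $X^n_j=X_{j2^n:(j+1)2^n-1}$ (so $X^n_1=Y^n_{C_n}$).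 $H(X)=\mathbb E_P[-\log P(X)]$ with natural logarithm. *)

theory Defs
  imports "HOL-Probability.Probability"
begin

text \<open>Randomness of level n: the random k_n-subset of {1..k_{n-1}}^2 (empty at level 0)
  together with the index C_n uniform on {1..k_n}. Levels are independent.\<close>

definition rha_level :: "(nat \<Rightarrow> nat) \<Rightarrow> nat \<Rightarrow> ((nat \<times> nat) set \<times> nat) pmf" where
  "rha_level k n =
     (case n of
        0 \<Rightarrow> pair_pmf (return_pmf {}) (pmf_of_set {1..k 0})
      | Suc m \<Rightarrow> pair_pmf
           (pmf_of_set {A. A \<subseteq> {1..k m} \<times> {1..k m} \<and> card A = k (Suc m)})
           (pmf_of_set {1..k (Suc m)}))"

definition rha_space :: "(nat \<Rightarrow> nat) \<Rightarrow> (nat \<Rightarrow> (nat \<times> nat) set \<times> nat) measure" where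
  "rha_space k = PiM UNIV (\<lambda>n. measure_pmf (rha_level k n))"

definition rha_LR :: "(nat \<Rightarrow> nat) \<Rightarrow> (nat \<Rightarrow> (nat \<times> nat) set \<times> nat) \<Rightarrow> nat \<Rightarrow> nat \<Rightarrow> nat \<times> nat" where
  "rha_LR k \<omega> n j =
     [(a, b). a \<leftarrow> [1..<k (n - 1) + 1], b \<leftarrow> [1..<k (n - 1) + 1], (a, b) \<in> fst (\<omega> n)] ! (j - 1)"

fun rha_Y :: "(nat \<Rightarrow> nat) \<Rightarrow> (nat \<Rightarrow> (nat \<times> nat) set \<times> nat) \<Rightarrow> nat \<Rightarrow> nat \<Rightarrow> nat list" where
  "rha_Y k \<omega> 0 j = [j]"
| "rha_Y k \<omega> (Suc n) j =
     rha_Y k \<omega> n (fst (rha_LR k \<omega> (Suc n) j)) @ rha_Y k \<omega> n (snd (rha_LR k \<omega> (Suc n) j))"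

text \<open>X_p (p \<ge> 1): the p-th symbol of Y^0_{C_0} Y^1_{C_1} Y^2_{C_2} ...;
  the first p blocks already have length 2^p - 1 \<ge> p.\<close>
definition rha_X :: "(nat \<Rightarrow> nat) \<Rightarrow> (nat \<Rightarrow> (nat \<times> nat) set \<times> nat) \<Rightarrow> nat \<Rightarrow> nat" where
  "rha_X k \<omega> p = concat (map (\<lambda>m. rha_Y k \<omega> m (snd (\<omega> m))) [0..<p]) ! (p - 1)"

definition rha_block :: "(nat \<Rightarrow> nat) \<Rightarrow> (nat \<Rightarrow> (nat \<times> nat) set \<times> nat) \<Rightarrow> nat \<Rightarrow> nat \<Rightarrow> nat list" where
  "rha_block k \<omega> n j = map (rha_X k \<omega>) [j * 2 ^ n..<(j + 1) * 2 ^ n]"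

definition rha_A :: "(nat \<Rightarrow> nat) \<Rightarrow> nat \<Rightarrow> nat \<Rightarrow> (nat \<Rightarrow> (nat \<times> nat) set \<times> nat) set" where
  "rha_A k n l = {\<omega> \<in> space (rha_space k).
      distinct (map (\<lambda>i. rha_block k \<omega> l i) [2 ^ (n - l)..<2 ^ (n - l + 1)])}"

definition ent :: "'a measure \<Rightarrow> ('a \<Rightarrow> 'b) \<Rightarrow> real" where
  "ent M Z = (\<integral>\<omega>. - ln (measure M {\<omega>' \<in> space M. Z \<omega>' = Z \<omega>}) \<partial>M)"

end

theory Submission
  imports Defs
begin


lemma space_rha[simp]: "space (rha_space k) = UNIV"
  by (simp add: rha_space_def space_PiM)

lemma prob_space_rha: "prob_space (rha_space k)"
  unfolding rha_space_def by (intro prob_space_PiM) (simp add: prob_space_measure_pmf)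

lemma resample_nn:
  assumes f: "f \<in> borel_measurable (rha_space k)"
  shows "(\<integral>\<^sup>+\<omega>. f \<omega> \<partial>rha_space k) =
    (\<integral>\<^sup>+\<omega>. (\<integral>\<^sup>+x. f (fun_upd \<omega> s x) \<partial>measure_pmf (rha_level k s)) \<partial>rha_space k)"
proof -
  let ?L = "measure_pmf (rha_level k s)"
  let ?M = "rha_space k"
  interpret P: pair_sigma_finite ?L ?M
    using prob_space_rha[of k]
    by (intro pair_sigma_finite.intro) (auto intro: prob_space_imp_sigma_finite prob_space_measure_pmf)
  have D: "distr (?L \<Otimes>\<^sub>M ?M) ?M (\<lambda>(x, X). fun_upd X s x) = ?M"
    using distr_pair_PiM_eq_PiM[of UNIV "\<lambda>n. measure_pmf (rha_level k n)" s]
    by (simp add: rha_space_def prob_space_measure_pmf insert_UNIV)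
  have gm: "(\<lambda>(x, X). fun_upd X s x) \<in> measurable (?L \<Otimes>\<^sub>M ?M) ?M"
  proof -
    have "(\<lambda>(f, y). f(s := y)) \<in> measurable (?M \<Otimes>\<^sub>M ?L) ?M"
      using measurable_add_dim[of s UNIV "\<lambda>n. measure_pmf (rha_level k n)"]
      by (simp add: rha_space_def insert_UNIV)
    then have "(\<lambda>(f, y). f(s := y)) \<circ> (\<lambda>(x, y). (y, x)) \<in> measurable (?L \<Otimes>\<^sub>M ?M) ?M"
      by (rule measurable_comp[OF measurable_pair_swap', rotated])
    then show ?thesis by (simp add: comp_def case_prod_unfold)
  qed
  have "(\<integral>\<^sup>+\<omega>. f \<omega> \<partial>?M) = (\<integral>\<^sup>+\<omega>. f \<omega> \<partial>distr (?L \<Otimes>\<^sub>M ?M) ?M (\<lambda>(x, X). fun_upd X s x))"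
    using D by simp
  also have "\<dots> = (\<integral>\<^sup>+p. f ((\<lambda>(x, X). fun_upd X s x) p) \<partial>(?L \<Otimes>\<^sub>M ?M))"
    using f gm by (intro nn_integral_distr) auto
  also have "\<dots> = (\<integral>\<^sup>+X. (\<integral>\<^sup>+x. f (fun_upd X s x) \<partial>?L) \<partial>?M)"
    using f gm by (subst P.nn_integral_snd[symmetric]) (auto intro: measurable_comp)
  finally show ?thesis .
qed


definition LRl :: "(nat \<Rightarrow> nat) \<Rightarrow> nat \<Rightarrow> (nat \<times> nat) set \<times> nat \<Rightarrow> nat \<Rightarrow> nat \<times> nat" where
  "LRl k s x t = [(a, b). a \<leftarrow> [1..<k (s - 1) + 1], b \<leftarrow> [1..<k (s - 1) + 1], (a, b) \<in> fst x] ! (t - 1)"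

lemma rha_LR_LRl: "rha_LR k \<omega> s t = LRl k s (\<omega> s) t"
  by (simp add: rha_LR_def LRl_def)

fun pth :: "(nat \<Rightarrow> nat) \<Rightarrow> (nat \<Rightarrow> (nat \<times> nat) set \<times> nat) \<Rightarrow> nat \<Rightarrow> nat \<Rightarrow> nat \<Rightarrow> nat \<Rightarrow> nat" where
  "pth k \<omega> l 0 i q = i"
| "pth k \<omega> l (Suc d) i q =
     (if q < 2 ^ d then pth k \<omega> l d (fst (rha_LR k \<omega> (Suc (l + d)) i)) q
      else pth k \<omega> l d (snd (rha_LR k \<omega> (Suc (l + d)) i)) (q - 2 ^ d))"

lemma take_drop_app: "x + n \<le> length A \<Longrightarrow> take n (drop x (A @ B)) = take n (drop x A)"
  by simp

lemma len_Y[simp]: "length (rha_Y k \<omega> n i) = 2 ^ n"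
  by (induction n arbitrary: i) auto

lemma sub_Y:
  assumes "q < 2 ^ d"
  shows "take (2 ^ l) (drop (q * 2 ^ l) (rha_Y k \<omega> (l + d) i)) = rha_Y k \<omega> l (pth k \<omega> l d i q)"
  using assms
proof (induction d arbitrary: i q)
  case 0
  then show ?case by simp
next
  case (Suc d)
  define A where "A = rha_Y k \<omega> (l + d) (fst (rha_LR k \<omega> (Suc (l + d)) i))"
  define B where "B = rha_Y k \<omega> (l + d) (snd (rha_LR k \<omega> (Suc (l + d)) i))"
  have Y: "rha_Y k \<omega> (l + Suc d) i = A @ B" by (simp add: A_def B_def)
  have lA: "length A = 2 ^ l * 2 ^ d" by (simp add: A_def power_add)
  show ?case
  proof (cases "q < 2 ^ d")
    case True
    have "(q + 1) * 2 ^ l \<le> 2 ^ d * 2 ^ l" using True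
      by (intro mult_right_mono) auto
    then have le: "q * 2 ^ l + 2 ^ l \<le> length A" using lA by (simp add: algebra_simps)
    have "take (2 ^ l) (drop (q * 2 ^ l) (A @ B)) = take (2 ^ l) (drop (q * 2 ^ l) A)"
      using take_drop_app[OF le] by blast
    also have "\<dots> = rha_Y k \<omega> l (pth k \<omega> l d (fst (rha_LR k \<omega> (Suc (l + d)) i)) q)"
      unfolding A_def by (rule Suc.IH[OF True])
    finally show ?thesis using True by (simp only: Y pth.simps if_True)
  next
    case False
    have q': "q - 2 ^ d < 2 ^ d" using Suc.prems False by simp
    have "q * 2 ^ l = length A + (q - 2 ^ d) * 2 ^ l" using False lA
      by (simp add: algebra_simps diff_mult_distrib)
    then have "drop (q * 2 ^ l) (A @ B) = drop ((q - 2 ^ d) * 2 ^ l) B"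
      by simp
    then have "take (2 ^ l) (drop (q * 2 ^ l) (A @ B)) = take (2 ^ l) (drop ((q - 2 ^ d) * 2 ^ l) B)"
      by simp
    also have "\<dots> = rha_Y k \<omega> l (pth k \<omega> l d (snd (rha_LR k \<omega> (Suc (l + d)) i)) (q - 2 ^ d))"
      unfolding B_def by (rule Suc.IH[OF q'])
    finally show ?thesis using False by (simp only: Y pth.simps if_False)
  qed
qed

lemma len_concat_Y: "length (concat (map (\<lambda>m. rha_Y k \<omega> m (snd (\<omega> m))) [0..<p])) = 2 ^ p - 1"
proof (induction p)
  case 0 then show ?case by simp
next
  case (Suc p)
  have "(1::nat) \<le> 2 ^ p" by simp
  have "length (concat (map (\<lambda>m. rha_Y k \<omega> m (snd (\<omega> m))) [0..<Suc p])) =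
     length (concat (map (\<lambda>m. rha_Y k \<omega> m (snd (\<omega> m))) [0..<p])) + 2 ^ p"
    by (simp only: upt_Suc_append[OF le0] map_append concat_append length_append) simp
  also have "\<dots> = 2 ^ p - 1 + 2 ^ p" using Suc by simp
  also have "\<dots> = 2 ^ Suc p - 1" using \<open>1 \<le> 2 ^ p\<close> by simp
  finally show ?case .
qed

lemma X_in_Y:
  assumes "2 ^ m \<le> p" "p < 2 ^ Suc m"
  shows "rha_X k \<omega> p = rha_Y k \<omega> m (snd (\<omega> m)) ! (p - 2 ^ m)"
proof -
  have mp: "m < p" using assms(1) less_exp[of m] by linarith
  let ?f = "\<lambda>m. rha_Y k \<omega> m (snd (\<omega> m))"
  have s1: "[0..<p] = [0..<m] @ [m..<p]" using upt_add_eq_append[of 0 m "p - m"] mp by simp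
  have s2: "[m..<p] = m # [Suc m..<p]" using mp by (simp add: upt_conv_Cons)
  have c: "concat (map ?f [0..<p]) = concat (map ?f [0..<m]) @ (?f m @ concat (map ?f [Suc m..<p]))"
    unfolding s1 s2 by simp
  have l: "length (concat (map ?f [0..<m])) = 2 ^ m - 1" by (rule len_concat_Y)
  have i1: "\<not> p - 1 < 2 ^ m - 1" using assms by simp
  have i2: "p - 1 - (2 ^ m - 1) = p - 2 ^ m" using assms by simp
  have i3: "p - 2 ^ m < length (?f m)" using assms by simp
  have "rha_X k \<omega> p = (?f m @ concat (map ?f [Suc m..<p])) ! (p - 2 ^ m)"
    unfolding rha_X_def c nth_append l using i1 i2 by (simp only: if_False)
  also have "\<dots> = ?f m ! (p - 2 ^ m)" using i3 by (simp only: nth_append if_True)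
  finally show ?thesis .
qed

lemma block_eq:
  assumes "2 ^ a \<le> j" "j < 2 ^ Suc a"
  shows "rha_block k \<omega> n j = rha_Y k \<omega> n (pth k \<omega> n a (snd (\<omega> (n + a))) (j - 2 ^ a))"
proof -
  let ?C = "snd (\<omega> (n + a))"
  have q: "j - 2 ^ a < 2 ^ a" using assms by simp
  have R: "rha_Y k \<omega> n (pth k \<omega> n a ?C (j - 2 ^ a)) =
      take (2 ^ n) (drop ((j - 2 ^ a) * 2 ^ n) (rha_Y k \<omega> (n + a) ?C))"
    using sub_Y[OF q, of n k \<omega> ?C] by simp
  have lenY: "length (rha_Y k \<omega> (n + a) ?C) = 2 ^ n * 2 ^ a" by (simp add: power_add)
  have le: "(j - 2 ^ a) * 2 ^ n + 2 ^ n \<le> 2 ^ n * 2 ^ a"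
  proof -
    have "(j - 2 ^ a + 1) * 2 ^ n \<le> 2 ^ a * 2 ^ n" using q by (intro mult_right_mono) auto
    then show ?thesis by (simp add: algebra_simps)
  qed
  show ?thesis
  proof (rule nth_equalityI)
    show "length (rha_block k \<omega> n j) = length (rha_Y k \<omega> n (pth k \<omega> n a ?C (j - 2 ^ a)))"
      by (simp add: rha_block_def algebra_simps)
  next
    fix t assume "t < length (rha_block k \<omega> n j)"
    then have t: "t < 2 ^ n" by (simp add: rha_block_def algebra_simps)
    have lo: "2 ^ (n + a) \<le> j * 2 ^ n + t"
    proof -
      have "2 ^ a * 2 ^ n \<le> j * 2 ^ n" using assms by simp
      then have "2 ^ (n + a) \<le> j * 2 ^ n" by (simp add: power_add mult.commute)
      then show ?thesis by linarith
    qed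
    have hi: "j * 2 ^ n + t < 2 ^ Suc (n + a)"
    proof -
      have "(j + 1) * 2 ^ n \<le> 2 ^ Suc a * 2 ^ n" using assms by (intro mult_right_mono) auto
      then show ?thesis using t by (simp add: power_add algebra_simps)
    qed
    have idx: "j * 2 ^ n + t - 2 ^ (n + a) = (j - 2 ^ a) * 2 ^ n + t"
      using assms by (simp add: power_add diff_mult_distrib algebra_simps)
    have "rha_block k \<omega> n j ! t = rha_X k \<omega> (j * 2 ^ n + t)"
      using t by (simp add: rha_block_def)
    also have "\<dots> = rha_Y k \<omega> (n + a) ?C ! ((j - 2 ^ a) * 2 ^ n + t)"
      using X_in_Y[OF lo hi] idx by simp
    also have "\<dots> = take (2 ^ n) (drop ((j - 2 ^ a) * 2 ^ n) (rha_Y k \<omega> (n + a) ?C)) ! t"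
    proof -
      have "(j - 2 ^ a) * 2 ^ n \<le> length (rha_Y k \<omega> (n + a) ?C)" using le lenY by linarith
      then show ?thesis using t by (simp add: nth_drop)
    qed
    finally show "rha_block k \<omega> n j ! t = rha_Y k \<omega> n (pth k \<omega> n a ?C (j - 2 ^ a)) ! t"
      using R by simp
  qed
qed


definition "MC k f \<longleftrightarrow> f \<in> rha_space k \<rightarrow>\<^sub>M count_space UNIV"

lemma MC_lvl: "MC k (\<lambda>\<omega>. g (\<omega> s))"
proof -
  have "(\<lambda>\<omega>. \<omega> s) \<in> measurable (rha_space k) (measure_pmf (rha_level k s))"
    unfolding rha_space_def by (rule measurable_component_singleton) simp
  moreover have "g \<in> measurable (measure_pmf (rha_level k s)) (count_space UNIV)" by simp
  ultimately show ?thesis unfolding MC_def by (rule measurable_compose)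
qed

lemma MC_const: "MC k (\<lambda>\<omega>. c)"
  unfolding MC_def by simp

lemma MC_1: "MC k f \<Longrightarrow> MC k (\<lambda>\<omega>. h (f \<omega>))"
  unfolding MC_def by (erule measurable_compose) simp

lemma MC_2:
  fixes f1 :: "_ \<Rightarrow> 'a::countable"
  assumes "MC k f1" "MC k f2"
  shows "MC k (\<lambda>\<omega>. h (f1 \<omega>) (f2 \<omega>))"
  unfolding MC_def
  by (rule measurable_compose_countable[where f="\<lambda>i \<omega>. h i (f2 \<omega>)", OF _ assms(1)[unfolded MC_def]])
     (rule MC_1[OF assms(2), unfolded MC_def])

lemma MC_lvl2:
  fixes f1 :: "_ \<Rightarrow> 'a::countable"
  assumes "MC k f1"
  shows "MC k (\<lambda>\<omega>. h (\<omega> s) (f1 \<omega>))"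
  unfolding MC_def
  by (rule measurable_compose_countable[where f="\<lambda>i \<omega>. h (\<omega> s) i", OF _ assms(1)[unfolded MC_def]])
     (rule MC_lvl[unfolded MC_def])

lemma MC_sel:
  fixes g :: "_ \<Rightarrow> 'a::countable"
  assumes "MC k g" "\<And>i. MC k (f i)"
  shows "MC k (\<lambda>\<omega>. f (g \<omega>) \<omega>)"
  unfolding MC_def
  by (rule measurable_compose_countable[where f="\<lambda>i \<omega>. f i \<omega>", OF _ assms(1)[unfolded MC_def]])
     (rule assms(2)[unfolded MC_def])

lemma MC_map:
  fixes f :: "'b \<Rightarrow> _ \<Rightarrow> 'a::countable"
  assumes "\<And>x. x \<in> set xs \<Longrightarrow> MC k (f x)"
  shows "MC k (\<lambda>\<omega>. map (\<lambda>x. f x \<omega>) xs)"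
  using assms
proof (induction xs)
  case Nil then show ?case by (simp add: MC_const)
next
  case (Cons a xs)
  have "MC k (\<lambda>\<omega>. f a \<omega> # map (\<lambda>x. f x \<omega>) xs)"
    by (rule MC_2[where h="(#)"]) (use Cons in auto)
  then show ?case by simp
qed

lemma MC_LR: "MC k (\<lambda>\<omega>. rha_LR k \<omega> s i)"
  unfolding rha_LR_LRl by (rule MC_lvl)

lemma MC_Y: "MC k (\<lambda>\<omega>. rha_Y k \<omega> n i)"
proof (induction n arbitrary: i)
  case 0 then show ?case by (simp add: MC_const)
next
  case (Suc n)
  have "MC k (\<lambda>\<omega>. (\<lambda>p. rha_Y k \<omega> n (fst p) @ rha_Y k \<omega> n (snd p)) (rha_LR k \<omega> (Suc n) i))"
    by (rule MC_sel[where f="\<lambda>p \<omega>. rha_Y k \<omega> n (fst p) @ rha_Y k \<omega> n (snd p)", OF MC_LR])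
       (rule MC_2[OF Suc Suc])
  then show ?case by simp
qed

lemma MC_YC: "MC k (\<lambda>\<omega>. rha_Y k \<omega> m (snd (\<omega> m)))"
  by (rule MC_sel[where f="\<lambda>i \<omega>. rha_Y k \<omega> m i", OF MC_lvl MC_Y])

lemma MC_X: "MC k (\<lambda>\<omega>. rha_X k \<omega> p)"
proof -
  have "MC k (\<lambda>\<omega>. map (\<lambda>m. rha_Y k \<omega> m (snd (\<omega> m))) [0..<p])"
    by (rule MC_map) (rule MC_YC)
  then have "MC k (\<lambda>\<omega>. concat (map (\<lambda>m. rha_Y k \<omega> m (snd (\<omega> m))) [0..<p]) ! (p - 1))"
    by (rule MC_1)
  then show ?thesis unfolding rha_X_def .
qed

lemma MC_block: "MC k (\<lambda>\<omega>. rha_block k \<omega> n j)"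
  unfolding rha_block_def by (rule MC_map) (rule MC_X)

lemma MC_sets: assumes "MC k f" shows "{\<omega>. P (f \<omega>)} \<in> sets (rha_space k)"
proof -
  have "f -` {x. P x} \<inter> space (rha_space k) \<in> sets (rha_space k)"
    by (rule measurable_sets[OF assms[unfolded MC_def]]) simp
  then show ?thesis by (simp add: vimage_def)
qed

lemma MC_pred_sets: "MC k (\<lambda>\<omega>. P \<omega>) \<Longrightarrow> {\<omega>. P \<omega>} \<in> sets (rha_space k)"
  using MC_sets[of k P "\<lambda>b. b"] by simp

lemma Y_cong: "(\<And>m. m \<le> n \<Longrightarrow> fst (\<omega> m) = fst (\<omega>' m)) \<Longrightarrow> rha_Y k \<omega> n i = rha_Y k \<omega>' n i"
proof (induction n arbitrary: i)
  case 0 then show ?case by simp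
next
  case (Suc n)
  have "rha_LR k \<omega> (Suc n) i = rha_LR k \<omega>' (Suc n) i"
    using Suc.prems[of "Suc n"] by (simp add: rha_LR_def)
  then show ?case using Suc by simp
qed


definition SS :: "(nat \<Rightarrow> nat) \<Rightarrow> nat \<Rightarrow> (nat \<times> nat) set set" where
  "SS k s = {A. A \<subseteq> {1..k (s - 1)} \<times> {1..k (s - 1)} \<and> card A = k s}"

definition goodlvl :: "(nat \<Rightarrow> nat) \<Rightarrow> nat \<Rightarrow> (nat \<times> nat) set \<times> nat \<Rightarrow> bool" where
  "goodlvl k m x \<longleftrightarrow> snd x \<in> {1..k m} \<and> (1 \<le> m \<longrightarrow> fst x \<in> SS k m)"

definition good :: "(nat \<Rightarrow> nat) \<Rightarrow> (nat \<Rightarrow> (nat \<times> nat) set \<times> nat) \<Rightarrow> bool" where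
  "good k \<omega> \<longleftrightarrow> (\<forall>m. goodlvl k m (\<omega> m))"

definition LL :: "(nat \<Rightarrow> nat) \<Rightarrow> nat \<Rightarrow> (nat \<times> nat) set \<times> nat \<Rightarrow> (nat \<times> nat) list" where
  "LL k s x = filter (\<lambda>p. p \<in> fst x) (List.product [1..<k (s - 1) + 1] [1..<k (s - 1) + 1])"

lemma lc_aux: "concat (map (\<lambda>b. if (a, b) \<in> S then [(a, b)] else []) ys) = filter (\<lambda>p. p \<in> S) (map (Pair a) ys)"
  by (induction ys) auto

lemma lc: "[(a, b). a \<leftarrow> xs, b \<leftarrow> ys, (a, b) \<in> S] = filter (\<lambda>p. p \<in> S) (List.product xs ys)"
  by (induction xs) (auto simp: lc_aux)

lemma LRl_LL: "LRl k s x t = LL k s x ! (t - 1)"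
  unfolding LRl_def LL_def lc ..

locale rhaL =
  fixes k :: "nat \<Rightarrow> nat"
  assumes kpos: "\<forall>m. 0 < k m"
    and kgrowth: "\<forall>m\<ge>1. k (m - 1) \<le> k m \<and> k m \<le> (k (m - 1))\<^sup>2"
begin

lemma SS_fin: "finite (SS k s)"
  unfolding SS_def by (rule finite_subset[of _ "Pow ({1..k (s - 1)} \<times> {1..k (s - 1)})"]) auto

lemma SS_ne: assumes "1 \<le> s" shows "SS k s \<noteq> {}"
proof -
  have "k s \<le> card ({1..k (s - 1)} \<times> {1..k (s - 1)})"
    using kgrowth assms by (simp add: card_cartesian_product power2_eq_square)
  then obtain T where "T \<subseteq> {1..k (s - 1)} \<times> {1..k (s - 1)}" "card T = k s"
    by (rule obtain_subset_with_card_n)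
  then show ?thesis unfolding SS_def by auto
qed

lemma level_pos: "1 \<le> s \<Longrightarrow> rha_level k s = pair_pmf (pmf_of_set (SS k s)) (pmf_of_set {1..k s})"
  by (cases s) (auto simp: rha_level_def SS_def)

lemma set_level: assumes "x \<in> set_pmf (rha_level k m)" shows "goodlvl k m x"
proof (cases m)
  case 0
  have "0 < k 0" using kpos by simp
  then have "set_pmf (pmf_of_set {1..k 0}) = {1..k 0}" by (intro set_pmf_of_set) auto
  then show ?thesis using assms 0
    by (auto simp: rha_level_def goodlvl_def)
next
  case (Suc m')
  then have "rha_level k m = pair_pmf (pmf_of_set (SS k m)) (pmf_of_set {1..k m})"
    using level_pos by simp
  moreover have "0 < k m" using kpos by simp
  moreover then have "set_pmf (pmf_of_set {1..k m}) = {1..k m}" by (intro set_pmf_of_set) auto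
  ultimately show ?thesis using assms SS_ne[of m] SS_fin[of m] Suc
    by (auto simp: goodlvl_def)
qed

lemma AE_good: "AE \<omega> in rha_space k. good k \<omega>"
  unfolding good_def AE_all_countable
proof
  fix m
  have "AE x in measure_pmf (rha_level k m). goodlvl k m x"
    using AE_measure_pmf[of "rha_level k m"] by (rule AE_mp) (auto intro: set_level)
  then show "AE \<omega> in rha_space k. goodlvl k m (\<omega> m)"
    unfolding rha_space_def
    using AE_PiM_component[of UNIV "\<lambda>n. measure_pmf (rha_level k n)" m "goodlvl k m"]
    by (simp add: prob_space_measure_pmf)
qed

lemma LL_props:
  assumes "goodlvl k s x" "1 \<le> s"
  shows "set (LL k s x) = fst x" "distinct (LL k s x)" "length (LL k s x) = k s"
proof -
  have sub: "fst x \<subseteq> {1..k (s - 1)} \<times> {1..k (s - 1)}" and c: "card (fst x) = k s"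
    using assms by (auto simp: goodlvl_def SS_def)
  show s: "set (LL k s x) = fst x"
    using sub unfolding LL_def by (auto simp: atLeastLessThanSuc_atLeastAtMost)
  show d: "distinct (LL k s x)" unfolding LL_def by (simp add: distinct_product)
  show "length (LL k s x) = k s" using distinct_card[OF d] s c by simp
qed

lemma LR_bij:
  assumes "goodlvl k s x" "1 \<le> s"
  shows "bij_betw (LRl k s x) {1..k s} (fst x)"
proof -
  note P = LL_props[OF assms]
  have "bij_betw (\<lambda>t. LL k s x ! t) {..<k s} (fst x)"
    using bij_betw_nth[OF P(2), of "{..<k s}"] P by (simp add: lessThan_atLeast0)
  moreover have "bij_betw (\<lambda>t. t - 1) {1..k s} {..<k s}"
    by (rule bij_betwI[where g="\<lambda>t. t + 1"]) auto
  ultimately have "bij_betw ((\<lambda>t. LL k s x ! t) \<circ> (\<lambda>t. t - 1)) {1..k s} (fst x)"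
    by (intro bij_betw_trans) auto
  moreover have "LRl k s x = (\<lambda>t. LL k s x ! (t - 1))" by (rule ext) (simp add: LRl_LL)
  ultimately show ?thesis by (simp add: comp_def)
qed

lemma LR_in:
  assumes "goodlvl k s x" "1 \<le> s" "t \<in> {1..k s}"
  shows "LRl k s x t \<in> {1..k (s - 1)} \<times> {1..k (s - 1)}"
proof -
  have "LRl k s x t \<in> fst x" using LR_bij[OF assms(1,2)] assms(3) by (auto simp: bij_betw_def)
  then show ?thesis using assms(1,2) by (auto simp: goodlvl_def SS_def)
qed

end

context rhaL begin
lemma Y_props:
  assumes "good k \<omega>"
  shows "inj_on (\<lambda>i. rha_Y k \<omega> n i) {1..k n} \<and> (\<forall>i\<in>{1..k n}. set (rha_Y k \<omega> n i) \<subseteq> {1..k 0})"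
proof (induction n)
  case 0
  then show ?case by (auto simp: inj_on_def)
next
  case (Suc n)
  have g: "goodlvl k (Suc n) (\<omega> (Suc n))" using assms by (simp add: good_def)
  have inR: "rha_LR k \<omega> (Suc n) i \<in> {1..k n} \<times> {1..k n}" if "i \<in> {1..k (Suc n)}" for i
    using LR_in[OF g _ that] by (simp add: rha_LR_LRl)
  have bij: "inj_on (\<lambda>i. rha_LR k \<omega> (Suc n) i) {1..k (Suc n)}"
    using LR_bij[OF g] by (simp add: rha_LR_LRl bij_betw_def)
  show ?case
  proof
    show "inj_on (\<lambda>i. rha_Y k \<omega> (Suc n) i) {1..k (Suc n)}"
    proof (rule inj_onI)
      fix i i' assume i: "i \<in> {1..k (Suc n)}" and i': "i' \<in> {1..k (Suc n)}"
        and eq: "rha_Y k \<omega> (Suc n) i = rha_Y k \<omega> (Suc n) i'"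
      have eq2: "rha_Y k \<omega> n (fst (rha_LR k \<omega> (Suc n) i)) @ rha_Y k \<omega> n (snd (rha_LR k \<omega> (Suc n) i))
         = rha_Y k \<omega> n (fst (rha_LR k \<omega> (Suc n) i')) @ rha_Y k \<omega> n (snd (rha_LR k \<omega> (Suc n) i'))"
        using eq by (simp only: rha_Y.simps)
      define a where "a = fst (rha_LR k \<omega> (Suc n) i)"
      define b where "b = snd (rha_LR k \<omega> (Suc n) i)"
      define a' where "a' = fst (rha_LR k \<omega> (Suc n) i')"
      define b' where "b' = snd (rha_LR k \<omega> (Suc n) i')"
      have e3: "rha_Y k \<omega> n a @ rha_Y k \<omega> n b = rha_Y k \<omega> n a' @ rha_Y k \<omega> n b'"
        using eq2 unfolding a_def b_def a'_def b'_def .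
      have ll: "length (rha_Y k \<omega> n a) = length (rha_Y k \<omega> n a')" by (simp only: len_Y)
      have ya: "rha_Y k \<omega> n a = rha_Y k \<omega> n a'" and yb: "rha_Y k \<omega> n b = rha_Y k \<omega> n b'"
        using iffD1[OF append_eq_append_conv[OF disjI1[OF ll]] e3] by blast+
      have ra: "a \<in> {1..k n}" "b \<in> {1..k n}" "a' \<in> {1..k n}" "b' \<in> {1..k n}"
        using inR[OF i] inR[OF i'] unfolding a_def b_def a'_def b'_def by (auto simp only: mem_Times_iff)
      have injn: "inj_on (\<lambda>i. rha_Y k \<omega> n i) {1..k n}" using Suc.IH by (rule conjunct1)
      have "a = a'" by (rule inj_onD[OF injn ya ra(1) ra(3)])
      moreover have "b = b'" by (rule inj_onD[OF injn yb ra(2) ra(4)])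
      ultimately have "rha_LR k \<omega> (Suc n) i = rha_LR k \<omega> (Suc n) i'"
        unfolding a_def b_def a'_def b'_def by (rule prod_eqI)
      then show "i = i'" by (rule inj_onD[OF bij _ i i'])
    qed
    show "\<forall>i\<in>{1..k (Suc n)}. set (rha_Y k \<omega> (Suc n) i) \<subseteq> {1..k 0}"
    proof
      fix i assume i: "i \<in> {1..k (Suc n)}"
      have "fst (rha_LR k \<omega> (Suc n) i) \<in> {1..k n}" "snd (rha_LR k \<omega> (Suc n) i) \<in> {1..k n}"
        using inR[OF i] by (auto simp only: mem_Times_iff)
      then show "set (rha_Y k \<omega> (Suc n) i) \<subseteq> {1..k 0}"
        using Suc.IH[THEN conjunct2] by (simp only: rha_Y.simps set_append Un_subset_iff)
    qed
  qed
qed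

lemma pth_range:
  assumes "good k \<omega>" "i \<in> {1..k (l + d)}" "q < 2 ^ d"
  shows "pth k \<omega> l d i q \<in> {1..k l}"
  using assms(2,3)
proof (induction d arbitrary: i q)
  case 0 then show ?case by simp
next
  case (Suc d)
  have g: "goodlvl k (Suc (l + d)) (\<omega> (Suc (l + d)))" using assms by (simp add: good_def)
  have inR: "rha_LR k \<omega> (Suc (l + d)) i \<in> {1..k (l + d)} \<times> {1..k (l + d)}"
    using LR_in[OF g _ ] Suc.prems(1) by (simp add: rha_LR_LRl)
  show ?case
  proof (cases "q < 2 ^ d")
    case True then show ?thesis using Suc.IH[of _ q] inR by (auto simp: mem_Times_iff)
  next
    case False
    then have "q - 2 ^ d < 2 ^ d" using Suc.prems by simp
    then show ?thesis using Suc.IH[of _ "q - 2 ^ d"] inR False by (auto simp: mem_Times_iff)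
  qed
qed

end


lemma card_contain:
  assumes U: "finite U" and T: "T \<subseteq> U" "card T = m" and mk: "m \<le> kk"
  shows "card {A. A \<subseteq> U \<and> card A = kk \<and> T \<subseteq> A} = (card U - m) choose (kk - m)"
proof -
  have fT: "finite T" using U T finite_subset by blast
  have "bij_betw (\<lambda>A. A - T) {A. A \<subseteq> U \<and> card A = kk \<and> T \<subseteq> A} {B. B \<subseteq> U - T \<and> card B = kk - m}"
  proof (rule bij_betwI[where g="\<lambda>B. B \<union> T"])
    show "(\<lambda>A. A - T) \<in> {A. A \<subseteq> U \<and> card A = kk \<and> T \<subseteq> A} \<rightarrow> {B. B \<subseteq> U - T \<and> card B = kk - m}"
      using T fT by (auto simp: card_Diff_subset)
    show "(\<lambda>B. B \<union> T) \<in> {B. B \<subseteq> U - T \<and> card B = kk - m} \<rightarrow> {A. A \<subseteq> U \<and> card A = kk \<and> T \<subseteq> A}"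
    proof
      fix B assume B: "B \<in> {B. B \<subseteq> U - T \<and> card B = kk - m}"
      then have fB: "finite B" using U finite_subset by blast
      have "card (B \<union> T) = card B + card T" using B fB fT by (intro card_Un_disjoint) auto
      then show "B \<union> T \<in> {A. A \<subseteq> U \<and> card A = kk \<and> T \<subseteq> A}" using B T mk by auto
    qed
  qed auto
  then have "card {A. A \<subseteq> U \<and> card A = kk \<and> T \<subseteq> A} = card {B. B \<subseteq> U - T \<and> card B = kk - m}"
    by (rule bij_betw_same_card)
  also have "\<dots> = card (U - T) choose (kk - m)" using U by (intro n_subsets) auto
  also have "card (U - T) = card U - m" using T fT by (simp add: card_Diff_subset)
  finally show ?thesis .
qed

lemma sum_ind_card:
  assumes "finite A"
  shows "(\<Sum>t\<in>A. indicator {x. P x t} x :: ennreal) = of_nat (card {t\<in>A. P x t})"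
proof -
  have "(\<Sum>t\<in>A. indicator {x. P x t} x :: ennreal) = (\<Sum>t\<in>A. indicator {t. P x t} t)"
    by (simp add: indicator_def)
  also have "\<dots> = of_nat (\<Sum>t\<in>A. indicator {t. P x t} t :: nat)"
    by (simp add: indicator_def)
  also have "(\<Sum>t\<in>A. indicator {t. P x t} t :: nat) = card (A \<inter> {t. P x t})"
    using assms by (rule sum_indicator_eq_card)
  also have "A \<inter> {t. P x t} = {t\<in>A. P x t}" by auto
  finally show ?thesis .
qed

lemma bij_filter: "bij_betw f A B \<Longrightarrow> bij_betw f {x\<in>A. P (f x)} {y\<in>B. P y}"
  unfolding bij_betw_def by (auto intro: inj_on_subset)

lemma sum_const_ennreal: "(\<Sum>b\<in>{1..K::nat}. ennreal c) = ennreal (real K * c)" if "0 \<le> c"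
  using that by (simp add: ennreal_mult ennreal_of_nat_eq_real_of_nat)

definition Pf :: "(nat \<Rightarrow> nat) \<Rightarrow> nat \<Rightarrow> (nat \<times> nat) set pmf" where
  "Pf k s = (if s = 0 then return_pmf {} else pmf_of_set (SS k s))"

context rhaL begin

lemma level_pair: "rha_level k s = pair_pmf (Pf k s) (pmf_of_set {1..k s})"
  by (cases s) (auto simp: rha_level_def Pf_def SS_def)

lemma emeasure_contain:
  assumes s: "1 \<le> s" and T: "T \<subseteq> {1..k (s - 1)} \<times> {1..k (s - 1)}" "card T = m" and mk: "m \<le> k s"
  shows "emeasure (measure_pmf (rha_level k s)) {x. T \<subseteq> fst x} =
    ennreal (real ((k (s - 1) ^ 2 - m) choose (k s - m)) / real (k (s - 1) ^ 2 choose k s))"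
proof -
  let ?U = "{1..k (s - 1)} \<times> {1..k (s - 1)}"
  have cU: "card ?U = k (s - 1) ^ 2" by (simp add: card_cartesian_product power2_eq_square)
  have ks: "k s \<le> k (s - 1) ^ 2" using kgrowth s by auto
  have "emeasure (measure_pmf (rha_level k s)) {x. T \<subseteq> fst x}
      = emeasure (measure_pmf (map_pmf fst (rha_level k s))) {A. T \<subseteq> A}"
    by (simp add: vimage_def)
  also have "map_pmf fst (rha_level k s) = pmf_of_set (SS k s)"
    using s by (simp add: level_pos map_fst_pair_pmf)
  also have "emeasure (measure_pmf (pmf_of_set (SS k s))) {A. T \<subseteq> A} = card (SS k s \<inter> {A. T \<subseteq> A}) / card (SS k s)"
    using SS_ne[OF s] SS_fin by (intro emeasure_pmf_of_set)
  also have "SS k s \<inter> {A. T \<subseteq> A} = {A. A \<subseteq> ?U \<and> card A = k s \<and> T \<subseteq> A}"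
    unfolding SS_def by blast
  also have fU: "finite ?U" by simp
  have "card {A. A \<subseteq> ?U \<and> card A = k s \<and> T \<subseteq> A} = (k (s - 1) ^ 2 - m) choose (k s - m)"
    using card_contain[OF fU T mk] unfolding cU .
  also have "card (SS k s) = k (s - 1) ^ 2 choose k s"
    using n_subsets[OF fU, of "k s"] unfolding cU SS_def .
  finally show ?thesis .
qed

lemma count_fst:
  assumes s: "1 \<le> s" and i: "i \<in> {1..k (s - 1)}"
  shows "(\<Sum>t\<in>{1..k s}. emeasure (measure_pmf (rha_level k s)) {x. fst (LRl k s x t) = i}) =
    ennreal (real (k s) / real (k (s - 1)))"
proof -
  let ?L = "measure_pmf (rha_level k s)"
  let ?K = "k (s - 1)"
  have Kp: "0 < ?K" using kpos by simp
  have kp: "0 < k s" using kpos by simp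
  have ks: "k s \<le> ?K ^ 2" using kgrowth s by auto
  have "(\<Sum>t\<in>{1..k s}. emeasure ?L {x. fst (LRl k s x t) = i}) =
      (\<Sum>t\<in>{1..k s}. \<integral>\<^sup>+x. indicator {x. fst (LRl k s x t) = i} x \<partial>?L)"
    by (simp add: nn_integral_indicator)
  also have "\<dots> = \<integral>\<^sup>+x. (\<Sum>t\<in>{1..k s}. indicator {x. fst (LRl k s x t) = i} x) \<partial>?L"
    by (rule nn_integral_sum[symmetric]) simp
  also have "\<dots> = \<integral>\<^sup>+x. (\<Sum>b\<in>{1..?K}. indicator {x. (i, b) \<in> fst x} x) \<partial>?L"
  proof (rule nn_integral_cong_AE)
    show "AE x in ?L. (\<Sum>t\<in>{1..k s}. indicator {x. fst (LRl k s x t) = i} x) =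
        (\<Sum>b\<in>{1..?K}. indicator {x. (i, b) \<in> fst x} x :: ennreal)"
      using AE_measure_pmf[of "rha_level k s"]
    proof (rule AE_mp, intro AE_I2 impI)
      fix x assume "x \<in> set_pmf (rha_level k s)"
      then have g: "goodlvl k s x" by (rule set_level)
      have sub: "fst x \<subseteq> {1..?K} \<times> {1..?K}" using g s by (auto simp: goodlvl_def SS_def)
      have bij: "bij_betw (LRl k s x) {1..k s} (fst x)" by (rule LR_bij[OF g s])
      have "(\<Sum>t\<in>{1..k s}. indicator {x. fst (LRl k s x t) = i} x :: ennreal)
          = of_nat (card {t\<in>{1..k s}. fst (LRl k s x t) = i})"
        by (rule sum_ind_card) simp
      also have "card {t\<in>{1..k s}. fst (LRl k s x t) = i} = card {p\<in>fst x. fst p = i}"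
        by (rule bij_betw_same_card[OF bij_filter[OF bij]])
      also have "{p\<in>fst x. fst p = i} = Pair i ` {b\<in>{1..?K}. (i, b) \<in> fst x}"
        using sub by auto
      also have "card \<dots> = card {b\<in>{1..?K}. (i, b) \<in> fst x}"
        by (rule card_image) (auto simp: inj_on_def)
      also have "(of_nat (card {b\<in>{1..?K}. (i, b) \<in> fst x}) :: ennreal) =
          (\<Sum>b\<in>{1..?K}. indicator {x. (i, b) \<in> fst x} x)"
        by (rule sum_ind_card[symmetric]) simp
      finally show "(\<Sum>t\<in>{1..k s}. indicator {x. fst (LRl k s x t) = i} x) =
        (\<Sum>b\<in>{1..?K}. indicator {x. (i, b) \<in> fst x} x :: ennreal)" .
    qed
  qed
  also have "\<dots> = (\<Sum>b\<in>{1..?K}. emeasure ?L {x. {(i, b)} \<subseteq> fst x})"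
    by (subst nn_integral_sum) (simp_all add: nn_integral_indicator)
  also have "\<dots> = (\<Sum>b\<in>{1..?K}. ennreal (real ((?K ^ 2 - 1) choose (k s - 1)) / real (?K ^ 2 choose k s)))"
    using i kp by (intro sum.cong refl emeasure_contain[OF s]) auto
  also have "\<dots> = ennreal (real (k s) / real ?K)"
  proof -
    have e: "k s * (?K ^ 2 choose k s) = ?K ^ 2 * ((?K ^ 2 - 1) choose (k s - 1))"
      using times_binomial_minus1_eq[OF kp] by simp
    have pos: "0 < ?K ^ 2 choose k s" using ks by simp
    define a where "a = real ((?K ^ 2 - 1) choose (k s - 1))"
    define b where "b = real (?K ^ 2 choose k s)"
    define K where "K = real ?K"
    define c where "c = real (k s)"
    have e': "c * b = K * K * a"
      using arg_cong[OF e, of real] unfolding a_def b_def K_def c_def by (simp add: power2_eq_square)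
    have bp: "0 < b" using pos unfolding b_def by simp
    have Kp': "0 < K" using Kp unfolding K_def by simp
    have "K * (a / b) = c / K"
      using e' bp Kp' by (simp add: field_simps)
    moreover have "0 \<le> a / b" using bp unfolding a_def by simp
    ultimately show ?thesis unfolding a_def b_def K_def c_def by (simp only: sum_const_ennreal)
  qed
  finally show ?thesis .
qed

end


lemma upd_meas: "(\<lambda>(\<omega>, x). fun_upd \<omega> s x) \<in> measurable (rha_space k \<Otimes>\<^sub>M measure_pmf (rha_level k s)) (rha_space k)"
  using measurable_add_dim[of s UNIV "\<lambda>n. measure_pmf (rha_level k n)"] by (simp add: rha_space_def insert_UNIV)

lemma emeasure_pmf_nn: "emeasure (measure_pmf p) {x. Q x} = (\<integral>\<^sup>+x. indicator {x. Q x} x \<partial>measure_pmf p)"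
  by (simp add: nn_integral_indicator)

lemma resample_meas:
  assumes "A \<in> sets (rha_space k)"
  shows "(\<lambda>\<omega>. emeasure (measure_pmf (rha_level k s)) {x. fun_upd \<omega> s x \<in> A}) \<in> borel_measurable (rha_space k)"
proof -
  have sf: "sigma_finite_measure (measure_pmf (rha_level k s))"
    by (rule prob_space_imp_sigma_finite[OF prob_space_measure_pmf])
  have "(\<lambda>p. indicator A ((\<lambda>(\<omega>, x). fun_upd \<omega> s x) p) :: ennreal) \<in> borel_measurable (rha_space k \<Otimes>\<^sub>M measure_pmf (rha_level k s))"
    by (rule measurable_compose[OF upd_meas]) (rule borel_measurable_indicator[OF assms])
  then have "(\<lambda>\<omega>. \<integral>\<^sup>+x. indicator A (fun_upd \<omega> s x) \<partial>measure_pmf (rha_level k s)) \<in> borel_measurable (rha_space k)"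
    using sigma_finite_measure.borel_measurable_nn_integral_fst[OF sf, of "\<lambda>p. indicator A ((\<lambda>(\<omega>, x). fun_upd \<omega> s x) p)" "rha_space k"]
    by simp
  moreover have "(\<integral>\<^sup>+x. indicator A (fun_upd \<omega> s x) \<partial>measure_pmf (rha_level k s)) = emeasure (measure_pmf (rha_level k s)) {x. fun_upd \<omega> s x \<in> A}" for \<omega>
    by (simp add: emeasure_pmf_nn indicator_def)
  ultimately show ?thesis by simp
qed

lemma resample_set:
  assumes "A \<in> sets (rha_space k)"
  shows "emeasure (rha_space k) A = (\<integral>\<^sup>+\<omega>. emeasure (measure_pmf (rha_level k s)) {x. fun_upd \<omega> s x \<in> A} \<partial>rha_space k)"
proof -
  have "emeasure (rha_space k) A = (\<integral>\<^sup>+\<omega>. indicator A \<omega> \<partial>rha_space k)" using assms by (simp add: nn_integral_indicator)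
  also have "\<dots> = (\<integral>\<^sup>+\<omega>. (\<integral>\<^sup>+x. indicator A (fun_upd \<omega> s x) \<partial>measure_pmf (rha_level k s)) \<partial>rha_space k)"
    by (rule resample_nn) (rule borel_measurable_indicator[OF assms])
  also have "\<dots> = (\<integral>\<^sup>+\<omega>. emeasure (measure_pmf (rha_level k s)) {x. fun_upd \<omega> s x \<in> A} \<partial>rha_space k)"
    by (intro nn_integral_cong) (simp add: emeasure_pmf_nn indicator_def)
  finally show ?thesis .
qed

lemma sets_mem: "A \<in> sets (rha_space k) \<Longrightarrow> MC k (\<lambda>\<omega>. \<omega> \<in> A)"
  unfolding MC_def by (subst pred_def) simp

lemma sets_sel:
  fixes J :: "_ \<Rightarrow> 'a::countable"
  assumes "MC k J" "\<And>i. F i \<in> sets (rha_space k)"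
  shows "{\<omega>. \<omega> \<in> F (J \<omega>)} \<in> sets (rha_space k)"
proof -
  have "MC k (\<lambda>\<omega>. (\<lambda>i \<omega>. \<omega> \<in> F i) (J \<omega>) \<omega>)"
    by (rule MC_sel[OF assms(1)]) (rule sets_mem[OF assms(2)])
  then show ?thesis by (intro MC_pred_sets) simp
qed

definition fstdep :: "nat \<Rightarrow> (nat \<Rightarrow> (nat \<Rightarrow> (nat \<times> nat) set \<times> nat) set) \<Rightarrow> bool" where
  "fstdep s F \<longleftrightarrow> (\<forall>i \<omega> \<omega>'. (\<forall>m\<le>s. fst (\<omega> m) = fst (\<omega>' m)) \<longrightarrow> (\<omega> \<in> F i \<longleftrightarrow> \<omega>' \<in> F i))"

definition unif :: "(nat \<Rightarrow> nat) \<Rightarrow> nat \<Rightarrow> ((nat \<Rightarrow> (nat \<times> nat) set \<times> nat) \<Rightarrow> nat) \<Rightarrow> bool" where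
  "unif k s J \<longleftrightarrow> MC k J \<and> (\<forall>F. (\<forall>i. F i \<in> sets (rha_space k)) \<longrightarrow> fstdep s F \<longrightarrow>
     of_nat (k s) * emeasure (rha_space k) {\<omega>. \<omega> \<in> F (J \<omega>)} = (\<Sum>i\<in>{1..k s}. emeasure (rha_space k) (F i)))"

context rhaL begin

lemma pair_int:
  "(\<integral>\<^sup>+x. g x \<partial>measure_pmf (rha_level k s)) =
     (\<integral>\<^sup>+a. (\<Sum>b\<in>{1..k s}. g (a, b)) / of_nat (k s) \<partial>measure_pmf (Pf k s))"
proof -
  have ne: "{1..k s} \<noteq> {}" using kpos by (simp add: Suc_le_eq)
  have iu: "(\<integral>\<^sup>+b. f b \<partial>measure_pmf (pmf_of_set {1..k s})) = (\<Sum>b\<in>{1..k s}. f b) / of_nat (k s)" for f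
    using nn_integral_pmf_of_set[OF ne, of f] by simp
  show ?thesis unfolding level_pair nn_integral_pair_pmf' iu ..
qed

lemma kfin: "(of_nat (k s) :: ennreal) \<noteq> 0" "(of_nat (k s) :: ennreal) \<noteq> top"
  using kpos by auto

lemma kcancel: "of_nat (k s) * (X / of_nat (k s)) = (X :: ennreal)"
  using kfin[of s] by (simp add: ennreal_times_divide mult.commute[of "of_nat (k s)"] mult_divide_eq_ennreal)

lemma inner_snd:
  assumes H: "\<And>i a b b'. H i (a, b) = H i (a, b')"
  shows "of_nat (k s) * emeasure (measure_pmf (rha_level k s)) {x. H (snd x) x} =
     (\<Sum>i\<in>{1..k s}. emeasure (measure_pmf (rha_level k s)) {x. H i x})"
proof -
  let ?P = "measure_pmf (Pf k s)"
  have hb: "indicator {x. H (snd x) x} (a, b) = (indicator {x. H b x} (a, 1) :: ennreal)" for a b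
    by (simp add: indicator_def H[of b a b 1])
  have hi: "indicator {x. H i x} (a, b) = (indicator {x. H i x} (a, 1) :: ennreal)" for a b i
    by (simp add: indicator_def H[of i a b 1])
  have "of_nat (k s) * emeasure (measure_pmf (rha_level k s)) {x. H (snd x) x} =
      of_nat (k s) * (\<integral>\<^sup>+a. (\<Sum>b\<in>{1..k s}. indicator {x. H (snd x) x} (a, b)) / of_nat (k s) \<partial>?P)"
    by (simp only: emeasure_pmf_nn pair_int)
  also have "\<dots> = (\<integral>\<^sup>+a. of_nat (k s) * ((\<Sum>b\<in>{1..k s}. indicator {x. H (snd x) x} (a, b)) / of_nat (k s)) \<partial>?P)"
    by (rule nn_integral_cmult[symmetric]) simp
  also have "\<dots> = (\<integral>\<^sup>+a. (\<Sum>b\<in>{1..k s}. indicator {x. H b x} (a, 1)) \<partial>?P)"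
    by (intro nn_integral_cong) (simp only: kcancel hb)
  also have "\<dots> = (\<Sum>b\<in>{1..k s}. \<integral>\<^sup>+a. indicator {x. H b x} (a, 1) \<partial>?P)"
    by (rule nn_integral_sum) simp
  also have "\<dots> = (\<Sum>i\<in>{1..k s}. emeasure (measure_pmf (rha_level k s)) {x. H i x})"
  proof (rule sum.cong[OF refl])
    fix i assume "i \<in> {1..k s}"
    have "emeasure (measure_pmf (rha_level k s)) {x. H i x} =
        (\<integral>\<^sup>+a. (\<Sum>b\<in>{1..k s}. indicator {x. H i x} (a, b)) / of_nat (k s) \<partial>?P)"
      by (simp only: emeasure_pmf_nn pair_int)
    also have "\<dots> = (\<integral>\<^sup>+a. (of_nat (k s) * indicator {x. H i x} (a, 1)) / of_nat (k s) \<partial>?P)"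
    proof (rule nn_integral_cong)
      fix a
      have "(\<Sum>b\<in>{1..k s}. indicator {x. H i x} (a, b)) = (\<Sum>b\<in>{1..k s}. indicator {x. H i x} (a, 1) :: ennreal)"
        by (rule sum.cong[OF refl hi])
      also have "\<dots> = of_nat (k s) * indicator {x. H i x} (a, 1)" by simp
      finally show "(\<Sum>b\<in>{1..k s}. indicator {x. H i x} (a, b)) / of_nat (k s) =
          (of_nat (k s) * indicator {x. H i x} (a, 1)) / (of_nat (k s) :: ennreal)" by simp
    qed
    also have "\<dots> = (\<integral>\<^sup>+a. indicator {x. H i x} (a, 1) \<partial>?P)"
      using kfin[of s] by (simp add: mult.commute[of "of_nat (k s)"] mult_divide_eq_ennreal)
    finally show "(\<integral>\<^sup>+a. indicator {x. H i x} (a, 1) \<partial>?P) = emeasure (measure_pmf (rha_level k s)) {x. H i x}" ..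
  qed
  finally show ?thesis .
qed

lemma unif_C: "unif k s (\<lambda>\<omega>. snd (\<omega> s))"
  unfolding unif_def
proof (intro conjI allI impI)
  show "MC k (\<lambda>\<omega>. snd (\<omega> s))" by (rule MC_lvl)
  fix F assume F: "\<forall>i. F i \<in> sets (rha_space k)" and fd: "fstdep s F"
  let ?L = "measure_pmf (rha_level k s)"
  let ?E = "{\<omega>. \<omega> \<in> F (snd (\<omega> s))}"
  have E: "?E \<in> sets (rha_space k)" using F by (intro sets_sel MC_lvl) auto
  have "of_nat (k s) * emeasure (rha_space k) ?E =
      of_nat (k s) * (\<integral>\<^sup>+\<omega>. emeasure ?L {x. fun_upd \<omega> s x \<in> ?E} \<partial>rha_space k)"
    using resample_set[OF E, of s] by simp
  also have "\<dots> = (\<integral>\<^sup>+\<omega>. of_nat (k s) * emeasure ?L {x. fun_upd \<omega> s x \<in> ?E} \<partial>rha_space k)"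
    by (rule nn_integral_cmult[symmetric]) (rule resample_meas[OF E])
  also have "\<dots> = (\<integral>\<^sup>+\<omega>. (\<Sum>i\<in>{1..k s}. emeasure ?L {x. fun_upd \<omega> s x \<in> F i}) \<partial>rha_space k)"
  proof (rule nn_integral_cong)
    fix \<omega>
    have "{x. fun_upd \<omega> s x \<in> ?E} = {x. (\<lambda>i x. fun_upd \<omega> s x \<in> F i) (snd x) x}" by simp
    moreover have "of_nat (k s) * emeasure ?L {x. (\<lambda>i x. fun_upd \<omega> s x \<in> F i) (snd x) x} =
        (\<Sum>i\<in>{1..k s}. emeasure ?L {x. (\<lambda>i x. fun_upd \<omega> s x \<in> F i) i x})"
    proof (rule inner_snd)
      fix i a b b'
      have "\<forall>m\<le>s. fst (fun_upd \<omega> s (a, b) m) = fst (fun_upd \<omega> s (a, b') m)" by simp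
      then show "(fun_upd \<omega> s (a, b) \<in> F i) = (fun_upd \<omega> s (a, b') \<in> F i)"
        using fd unfolding fstdep_def by blast
    qed
    ultimately show "of_nat (k s) * emeasure ?L {x. fun_upd \<omega> s x \<in> ?E} =
        (\<Sum>i\<in>{1..k s}. emeasure ?L {x. fun_upd \<omega> s x \<in> F i})" by simp
  qed
  also have "\<dots> = (\<Sum>i\<in>{1..k s}. \<integral>\<^sup>+\<omega>. emeasure ?L {x. fun_upd \<omega> s x \<in> F i} \<partial>rha_space k)"
    by (rule nn_integral_sum) (use F resample_meas in auto)
  also have "\<dots> = (\<Sum>i\<in>{1..k s}. emeasure (rha_space k) (F i))"
    using F resample_set by (intro sum.cong refl) auto
  finally show "of_nat (k s) * emeasure (rha_space k) ?E = (\<Sum>i\<in>{1..k s}. emeasure (rha_space k) (F i))" .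
qed

end


context rhaL begin

lemma count_snd:
  assumes s: "1 \<le> s" and i: "i \<in> {1..k (s - 1)}"
  shows "(\<Sum>t\<in>{1..k s}. emeasure (measure_pmf (rha_level k s)) {x. snd (LRl k s x t) = i}) =
    ennreal (real (k s) / real (k (s - 1)))"
proof -
  let ?L = "measure_pmf (rha_level k s)"
  let ?K = "k (s - 1)"
  have Kp: "0 < ?K" using kpos by simp
  have kp: "0 < k s" using kpos by simp
  have ks: "k s \<le> ?K ^ 2" using kgrowth s by auto
  have "(\<Sum>t\<in>{1..k s}. emeasure ?L {x. snd (LRl k s x t) = i}) =
      (\<Sum>t\<in>{1..k s}. \<integral>\<^sup>+x. indicator {x. snd (LRl k s x t) = i} x \<partial>?L)"
    by (simp add: nn_integral_indicator)
  also have "\<dots> = \<integral>\<^sup>+x. (\<Sum>t\<in>{1..k s}. indicator {x. snd (LRl k s x t) = i} x) \<partial>?L"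
    by (rule nn_integral_sum[symmetric]) simp
  also have "\<dots> = \<integral>\<^sup>+x. (\<Sum>b\<in>{1..?K}. indicator {x. (b, i) \<in> fst x} x) \<partial>?L"
  proof (rule nn_integral_cong_AE)
    show "AE x in ?L. (\<Sum>t\<in>{1..k s}. indicator {x. snd (LRl k s x t) = i} x) =
        (\<Sum>b\<in>{1..?K}. indicator {x. (b, i) \<in> fst x} x :: ennreal)"
      using AE_measure_pmf[of "rha_level k s"]
    proof (rule AE_mp, intro AE_I2 impI)
      fix x assume "x \<in> set_pmf (rha_level k s)"
      then have g: "goodlvl k s x" by (rule set_level)
      have sub: "fst x \<subseteq> {1..?K} \<times> {1..?K}" using g s by (auto simp: goodlvl_def SS_def)
      have bij: "bij_betw (LRl k s x) {1..k s} (fst x)" by (rule LR_bij[OF g s])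
      have "(\<Sum>t\<in>{1..k s}. indicator {x. snd (LRl k s x t) = i} x :: ennreal)
          = of_nat (card {t\<in>{1..k s}. snd (LRl k s x t) = i})"
        by (rule sum_ind_card) simp
      also have "card {t\<in>{1..k s}. snd (LRl k s x t) = i} = card {p\<in>fst x. snd p = i}"
        by (rule bij_betw_same_card[OF bij_filter[OF bij]])
      also have "{p\<in>fst x. snd p = i} = (\<lambda>b. (b, i)) ` {b\<in>{1..?K}. (b, i) \<in> fst x}"
        using sub by auto
      also have "card \<dots> = card {b\<in>{1..?K}. (b, i) \<in> fst x}"
        by (rule card_image) (auto simp: inj_on_def)
      also have "(of_nat (card {b\<in>{1..?K}. (b, i) \<in> fst x}) :: ennreal) =
          (\<Sum>b\<in>{1..?K}. indicator {x. (b, i) \<in> fst x} x)"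
        by (rule sum_ind_card[symmetric]) simp
      finally show "(\<Sum>t\<in>{1..k s}. indicator {x. snd (LRl k s x t) = i} x) =
        (\<Sum>b\<in>{1..?K}. indicator {x. (b, i) \<in> fst x} x :: ennreal)" .
    qed
  qed
  also have "\<dots> = (\<Sum>b\<in>{1..?K}. emeasure ?L {x. {(b, i)} \<subseteq> fst x})"
    by (subst nn_integral_sum) (simp_all add: nn_integral_indicator)
  also have "\<dots> = (\<Sum>b\<in>{1..?K}. ennreal (real ((?K ^ 2 - 1) choose (k s - 1)) / real (?K ^ 2 choose k s)))"
    using i kp by (intro sum.cong refl emeasure_contain[OF s]) auto
  also have "\<dots> = ennreal (real (k s) / real ?K)"
  proof -
    have e: "k s * (?K ^ 2 choose k s) = ?K ^ 2 * ((?K ^ 2 - 1) choose (k s - 1))"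
      using times_binomial_minus1_eq[OF kp] by simp
    have pos: "0 < ?K ^ 2 choose k s" using ks by simp
    define a where "a = real ((?K ^ 2 - 1) choose (k s - 1))"
    define b where "b = real (?K ^ 2 choose k s)"
    define K where "K = real ?K"
    define c where "c = real (k s)"
    have e': "c * b = K * K * a"
      using arg_cong[OF e, of real] unfolding a_def b_def K_def c_def by (simp add: power2_eq_square)
    have bp: "0 < b" using pos unfolding b_def by simp
    have Kp': "0 < K" using Kp unfolding K_def by simp
    have "K * (a / b) = c / K"
      using e' bp Kp' by (simp add: field_simps)
    moreover have "0 \<le> a / b" using bp unfolding a_def by simp
    ultimately show ?thesis unfolding a_def b_def K_def c_def by (simp only: sum_const_ennreal)
  qed
  finally show ?thesis .
qed


end


context rhaL begin

lemma unif_step: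
  assumes s: "1 \<le> s" and J: "unif k s J"
    and cnt: "\<And>i. i \<in> {1..k (s - 1)} \<Longrightarrow>
      (\<Sum>t\<in>{1..k s}. emeasure (measure_pmf (rha_level k s)) {x. sel (LRl k s x t) = i}) = ennreal (real (k s) / real (k (s - 1)))"
    and rng: "\<And>x t. x \<in> set_pmf (rha_level k s) \<Longrightarrow> t \<in> {1..k s} \<Longrightarrow> sel (LRl k s x t) \<in> {1..k (s - 1)}"
  shows "unif k (s - 1) (\<lambda>\<omega>. sel (rha_LR k \<omega> s (J \<omega>)))"
  unfolding unif_def
proof (intro conjI allI impI)
  let ?M = "rha_space k"
  let ?L = "measure_pmf (rha_level k s)"
  let ?K = "k (s - 1)"
  have MJ: "MC k J" using J by (simp add: unif_def)
  have MS: "MC k (\<lambda>\<omega>. sel (rha_LR k \<omega> s t))" for t by (rule MC_1[OF MC_LR])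
  show "MC k (\<lambda>\<omega>. sel (rha_LR k \<omega> s (J \<omega>)))"
    by (rule MC_sel[OF MJ, where f="\<lambda>t \<omega>. sel (rha_LR k \<omega> s t)"]) (rule MS)
  fix F assume F: "\<forall>i. F i \<in> sets ?M" and fd: "fstdep (s - 1) F"
  define F' where "F' t = {\<omega>. \<omega> \<in> F (sel (rha_LR k \<omega> s t))}" for t
  have F'm: "F' t \<in> sets ?M" for t
    unfolding F'_def by (rule sets_sel[OF MS]) (use F in auto)
  have fd': "fstdep s F'"
    unfolding fstdep_def
  proof (intro allI impI)
    fix i and \<omega> \<omega>' :: "nat \<Rightarrow> (nat \<times> nat) set \<times> nat" assume a: "\<forall>m\<le>s. fst (\<omega> m) = fst (\<omega>' m)"
    then have "rha_LR k \<omega> s i = rha_LR k \<omega>' s i" by (simp add: rha_LR_def)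
    moreover have "\<forall>m\<le>s - 1. fst (\<omega> m) = fst (\<omega>' m)" using a by simp
    ultimately show "(\<omega> \<in> F' i) = (\<omega>' \<in> F' i)" using fd unfolding fstdep_def F'_def by auto
  qed
  have E: "{\<omega>. \<omega> \<in> F (sel (rha_LR k \<omega> s (J \<omega>)))} = {\<omega>. \<omega> \<in> F' (J \<omega>)}" by (simp add: F'_def)
  have U: "of_nat (k s) * emeasure ?M {\<omega>. \<omega> \<in> F (sel (rha_LR k \<omega> s (J \<omega>)))} = (\<Sum>t\<in>{1..k s}. emeasure ?M (F' t))"
    using J F'm fd' unfolding unif_def E by blast
  define c where "c = ennreal (real (k s) / real ?K)"
  have PW: "(\<Sum>t\<in>{1..k s}. emeasure ?L {x. fun_upd \<omega> s x \<in> F' t}) = (\<Sum>i\<in>{1..?K}. c * indicator (F i) \<omega>)" for \<omega>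
  proof -
    have step1: "emeasure ?L {x. fun_upd \<omega> s x \<in> F' t} =
        (\<Sum>i\<in>{1..?K}. indicator (F i) \<omega> * emeasure ?L {x. sel (LRl k s x t) = i})" if t: "t \<in> {1..k s}" for t
    proof -
      have eqv: "(fun_upd \<omega> s x \<in> F' t) = (\<omega> \<in> F (sel (LRl k s x t)))" for x
      proof -
        have "\<forall>m\<le>s - 1. fst (fun_upd \<omega> s x m) = fst (\<omega> m)" using s by auto
        then have "(fun_upd \<omega> s x \<in> F i) = (\<omega> \<in> F i)" for i using fd unfolding fstdep_def by blast
        then show ?thesis by (simp add: F'_def rha_LR_LRl)
      qed
      have "emeasure ?L {x. fun_upd \<omega> s x \<in> F' t} = (\<integral>\<^sup>+x. indicator {x. \<omega> \<in> F (sel (LRl k s x t))} x \<partial>?L)"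
        by (simp only: eqv emeasure_pmf_nn)
      also have "\<dots> = (\<integral>\<^sup>+x. (\<Sum>i\<in>{1..?K}. indicator (F i) \<omega> * indicator {x. sel (LRl k s x t) = i} x) \<partial>?L)"
      proof (rule nn_integral_cong_AE)
        show "AE x in ?L. indicator {x. \<omega> \<in> F (sel (LRl k s x t))} x =
            (\<Sum>i\<in>{1..?K}. indicator (F i) \<omega> * indicator {x. sel (LRl k s x t) = i} x :: ennreal)"
          using AE_measure_pmf[of "rha_level k s"]
        proof (rule AE_mp, intro AE_I2 impI)
          fix x assume "x \<in> set_pmf (rha_level k s)"
          then have r: "sel (LRl k s x t) \<in> {1..?K}" by (rule rng[OF _ t])
          have "(\<Sum>i\<in>{1..?K}. indicator (F i) \<omega> * indicator {x. sel (LRl k s x t) = i} x :: ennreal) =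
              (\<Sum>i\<in>{1..?K}. if i = sel (LRl k s x t) then indicator (F i) \<omega> else 0)"
            by (intro sum.cong refl) (auto simp: indicator_def)
          also have "\<dots> = indicator (F (sel (LRl k s x t))) \<omega>"
            using r by (simp add: sum.delta')
          finally show "indicator {x. \<omega> \<in> F (sel (LRl k s x t))} x =
            (\<Sum>i\<in>{1..?K}. indicator (F i) \<omega> * indicator {x. sel (LRl k s x t) = i} x :: ennreal)"
            by (simp add: indicator_def)
        qed
      qed
      also have "\<dots> = (\<Sum>i\<in>{1..?K}. \<integral>\<^sup>+x. indicator (F i) \<omega> * indicator {x. sel (LRl k s x t) = i} x \<partial>?L)"
        by (rule nn_integral_sum) simp
      also have "\<dots> = (\<Sum>i\<in>{1..?K}. indicator (F i) \<omega> * emeasure ?L {x. sel (LRl k s x t) = i})"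
        by (intro sum.cong refl) (simp add: nn_integral_cmult_indicator)
      finally show ?thesis .
    qed
    have "(\<Sum>t\<in>{1..k s}. emeasure ?L {x. fun_upd \<omega> s x \<in> F' t}) =
        (\<Sum>t\<in>{1..k s}. \<Sum>i\<in>{1..?K}. indicator (F i) \<omega> * emeasure ?L {x. sel (LRl k s x t) = i})"
      by (rule sum.cong[OF refl step1])
    also have "\<dots> = (\<Sum>i\<in>{1..?K}. indicator (F i) \<omega> * (\<Sum>t\<in>{1..k s}. emeasure ?L {x. sel (LRl k s x t) = i}))"
      by (subst sum.swap) (simp add: sum_distrib_left)
    also have "\<dots> = (\<Sum>i\<in>{1..?K}. c * indicator (F i) \<omega>)"
    proof (rule sum.cong[OF refl])
      fix i assume i: "i \<in> {1..?K}"
      show "indicator (F i) \<omega> * (\<Sum>t\<in>{1..k s}. emeasure ?L {x. sel (LRl k s x t) = i}) = c * indicator (F i) \<omega>"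
        unfolding cnt[OF i] c_def by (rule mult.commute)
    qed
    finally show ?thesis .
  qed
  have key: "(\<Sum>t\<in>{1..k s}. emeasure ?M (F' t)) = c * (\<Sum>i\<in>{1..?K}. emeasure ?M (F i))"
  proof -
    have "(\<Sum>t\<in>{1..k s}. emeasure ?M (F' t)) = (\<Sum>t\<in>{1..k s}. \<integral>\<^sup>+\<omega>. emeasure ?L {x. fun_upd \<omega> s x \<in> F' t} \<partial>?M)"
      by (intro sum.cong refl resample_set F'm)
    also have "\<dots> = (\<integral>\<^sup>+\<omega>. (\<Sum>t\<in>{1..k s}. emeasure ?L {x. fun_upd \<omega> s x \<in> F' t}) \<partial>?M)"
      by (rule nn_integral_sum[symmetric]) (rule resample_meas[OF F'm])
    also have "\<dots> = (\<integral>\<^sup>+\<omega>. (\<Sum>i\<in>{1..?K}. c * indicator (F i) \<omega>) \<partial>?M)"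
      by (simp only: PW)
    also have "\<dots> = (\<Sum>i\<in>{1..?K}. \<integral>\<^sup>+\<omega>. c * indicator (F i) \<omega> \<partial>?M)"
      by (rule nn_integral_sum) (use F in auto)
    also have "\<dots> = (\<Sum>i\<in>{1..?K}. c * emeasure ?M (F i))"
      using F by (intro sum.cong refl) (simp add: nn_integral_cmult nn_integral_indicator)
    finally show ?thesis by (simp add: sum_distrib_left)
  qed
  have Kc: "of_nat ?K * c = of_nat (k s)"
  proof -
    have "real ?K * (real (k s) / real ?K) = real (k s)" using kpos by simp
    then show ?thesis unfolding c_def
      by (simp add: ennreal_of_nat_eq_real_of_nat ennreal_mult[symmetric])
  qed
  let ?P = "emeasure ?M {\<omega>. \<omega> \<in> F (sel (rha_LR k \<omega> s (J \<omega>)))}"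
  have "of_nat (k s) * (of_nat ?K * ?P) = of_nat (k s) * (\<Sum>i\<in>{1..?K}. emeasure ?M (F i))"
  proof -
    have "of_nat (k s) * (of_nat ?K * ?P) = of_nat ?K * (of_nat (k s) * ?P)" by (simp add: ac_simps)
    also have "\<dots> = of_nat ?K * (c * (\<Sum>i\<in>{1..?K}. emeasure ?M (F i)))" using U key by simp
    also have "\<dots> = of_nat (k s) * (\<Sum>i\<in>{1..?K}. emeasure ?M (F i))"
      using Kc by (simp add: mult.assoc[symmetric])
    finally show ?thesis .
  qed
  then show "of_nat ?K * ?P = (\<Sum>i\<in>{1..?K}. emeasure ?M (F i))"
    using kfin[of s] by (simp add: ennreal_mult_cancel_left)
qed

lemma unif_fst: assumes s: "1 \<le> s" and J: "unif k s J" shows "unif k (s - 1) (\<lambda>\<omega>. fst (rha_LR k \<omega> s (J \<omega>)))"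
  apply (rule unif_step[OF s J])
   apply (erule count_fst[OF s])
  apply (drule set_level)
  apply (drule (1) LR_in[OF _ s])
  apply (auto simp: mem_Times_iff)
  done

lemma unif_snd: assumes s: "1 \<le> s" and J: "unif k s J" shows "unif k (s - 1) (\<lambda>\<omega>. snd (rha_LR k \<omega> s (J \<omega>)))"
  apply (rule unif_step[OF s J])
   apply (erule count_snd[OF s])
  apply (drule set_level)
  apply (drule (1) LR_in[OF _ s])
  apply (auto simp: mem_Times_iff)
  done

lemma unif_pth: "unif k (l + d) J \<Longrightarrow> unif k l (\<lambda>\<omega>. pth k \<omega> l d (J \<omega>) q)"
proof (induction d arbitrary: J q)
  case 0 then show ?case by simp
next
  case (Suc d)
  have s: "1 \<le> Suc (l + d)" by simp
  show ?case
  proof (cases "q < 2 ^ d")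
    case True
    have "unif k (l + d) (\<lambda>\<omega>. fst (rha_LR k \<omega> (Suc (l + d)) (J \<omega>)))"
      using unif_fst[OF s] Suc.prems by simp
    from Suc.IH[OF this, of q] show ?thesis using True by simp
  next
    case False
    have "unif k (l + d) (\<lambda>\<omega>. snd (rha_LR k \<omega> (Suc (l + d)) (J \<omega>)))"
      using unif_snd[OF s] Suc.prems by simp
    from Suc.IH[OF this, of "q - 2 ^ d"] show ?thesis using False by simp
  qed
qed

end


definition chunk :: "nat \<Rightarrow> nat list \<Rightarrow> nat \<Rightarrow> nat list" where
  "chunk l z q = take (2 ^ l) (drop (q * 2 ^ l) z)"

lemma A_eq:
  assumes "l \<le> n"
  shows "rha_A k n l = {\<omega>. distinct (map (chunk l (rha_block k \<omega> n 1)) [0..<2 ^ (n - l)])}"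
proof -
  have P: "2 ^ (n - l) * 2 ^ l = (2::nat) ^ n" using assms by (simp add: power_add[symmetric])
  have "map (\<lambda>i. rha_block k \<omega> l i) [2 ^ (n - l)..<2 ^ (n - l + 1)] = map (chunk l (rha_block k \<omega> n 1)) [0..<2 ^ (n - l)]" for \<omega>
  proof (rule nth_equalityI)
    show "length (map (\<lambda>i. rha_block k \<omega> l i) [2 ^ (n - l)..<2 ^ (n - l + 1)]) = length (map (chunk l (rha_block k \<omega> n 1)) [0..<2 ^ (n - l)])"
      by simp
  next
    fix q assume "q < length (map (\<lambda>i. rha_block k \<omega> l i) [2 ^ (n - l)..<2 ^ (n - l + 1)])"
    then have q: "q < 2 ^ (n - l)" by simp
    have le: "2 ^ n + q * 2 ^ l + 2 ^ l \<le> 2 * 2 ^ n"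
    proof -
      have "(q + 1) * 2 ^ l \<le> 2 ^ (n - l) * 2 ^ l" using q by (intro mult_right_mono) auto
      then show ?thesis using P by (simp add: algebra_simps)
    qed
    have e1: "rha_block k \<omega> l (2 ^ (n - l) + q) = map (rha_X k \<omega>) [2 ^ n + q * 2 ^ l..<2 ^ n + q * 2 ^ l + 2 ^ l]"
      unfolding rha_block_def using P by (simp add: algebra_simps)
    have e2: "chunk l (rha_block k \<omega> n 1) q = map (rha_X k \<omega>) [2 ^ n + q * 2 ^ l..<2 ^ n + q * 2 ^ l + 2 ^ l]"
      unfolding chunk_def rha_block_def using le by (simp add: take_map drop_map drop_upt take_upt add.commute)
    show "map (\<lambda>i. rha_block k \<omega> l i) [2 ^ (n - l)..<2 ^ (n - l + 1)] ! q = map (chunk l (rha_block k \<omega> n 1)) [0..<2 ^ (n - l)] ! q"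
      using q e1 e2 by simp
  qed
  then show ?thesis by (simp add: rha_A_def)
qed

context rhaL begin

lemma block_dist_eq:
  assumes j: "1 \<le> j"
  shows "emeasure (rha_space k) {\<omega>. P (rha_block k \<omega> n j)} = emeasure (rha_space k) {\<omega>. P (rha_block k \<omega> n 1)}"
proof -
  define F where "F i = {\<omega>. P (rha_Y k \<omega> n i)}" for i
  have Fm: "\<forall>i. F i \<in> sets (rha_space k)" unfolding F_def by (auto intro: MC_sets MC_Y)
  have fd: "fstdep n F" unfolding fstdep_def F_def
  proof (intro allI impI)
    fix i and \<omega> \<omega>' :: "nat \<Rightarrow> (nat \<times> nat) set \<times> nat" assume "\<forall>m\<le>n. fst (\<omega> m) = fst (\<omega>' m)"
    then have "rha_Y k \<omega> n i = rha_Y k \<omega>' n i" by (intro Y_cong) auto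
    then show "(\<omega> \<in> {\<omega>. P (rha_Y k \<omega> n i)}) = (\<omega>' \<in> {\<omega>. P (rha_Y k \<omega> n i)})" by simp
  qed
  have gen: "of_nat (k n) * emeasure (rha_space k) {\<omega>. P (rha_block k \<omega> n j')} = (\<Sum>i\<in>{1..k n}. emeasure (rha_space k) (F i))"
    if j': "1 \<le> j'" for j'
  proof -
    obtain a where a: "2 ^ a \<le> j'" "j' < 2 ^ Suc a" using ex_power_ivl1[of 2 j'] j' by auto
    define J where "J \<omega> = pth k \<omega> n a (snd (\<omega> (n + a))) (j' - 2 ^ a)" for \<omega>
    have u: "unif k n J" unfolding J_def by (rule unif_pth[where l=n and d=a]) (rule unif_C)
    have "{\<omega>. P (rha_block k \<omega> n j')} = {\<omega>. \<omega> \<in> F (J \<omega>)}"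
      using block_eq[OF a] by (auto simp: F_def J_def)
    then show ?thesis using u Fm fd unfolding unif_def by auto
  qed
  have "of_nat (k n) * emeasure (rha_space k) {\<omega>. P (rha_block k \<omega> n j)} =
      of_nat (k n) * emeasure (rha_space k) {\<omega>. P (rha_block k \<omega> n 1)}"
    using gen[OF j] gen[of 1] by simp
  then show ?thesis using kfin[of n] by (simp add: ennreal_mult_cancel_left)
qed

end


lemma term_nonneg: fixes p :: real shows "0 \<le> p \<Longrightarrow> p \<le> 1 \<Longrightarrow> 0 \<le> p * (- ln p)"
proof (cases "p = 0")
  case False
  assume "0 \<le> p" "p \<le> 1"
  then have "ln p \<le> 0" using False by simp
  then show ?thesis using \<open>0 \<le> p\<close> by (simp add: mult_nonneg_nonpos)
qed simp

lemma term_ge: fixes p c :: real assumes "0 \<le> p" "p \<le> exp (- c)" shows "p * c \<le> p * (- ln p)"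
proof (cases "p = 0")
  case True then show ?thesis by simp
next
  case False
  then have pp: "0 < p" using assms by simp
  have "ln p \<le> - c" using assms(2) pp by (metis ln_exp ln_le_cancel_iff exp_gt_zero)
  then show ?thesis using pp by (intro mult_left_mono) auto
qed

lemma ent_lower:
  fixes Z :: "_ \<Rightarrow> nat list"
  assumes Z: "MC k Z" and V: "finite V" and AEV: "AE \<omega> in rha_space k. Z \<omega> \<in> V"
    and bnd: "\<And>v. v \<in> B \<Longrightarrow> measure (rha_space k) {\<omega>. Z \<omega> = v} \<le> exp (- c)"
  shows "c * measure (rha_space k) {\<omega>. Z \<omega> \<in> B} \<le> ent (rha_space k) Z"
proof -
  interpret P: prob_space "rha_space k" by (rule prob_space_rha)
  let ?M = "rha_space k"
  define p where "p v = measure ?M {\<omega>. Z \<omega> = v}" for v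
  have Zs: "{\<omega>. Z \<omega> = v} \<in> sets ?M" for v by (rule MC_sets[OF Z])
  have ZS: "{\<omega>. Z \<omega> \<in> S} \<in> sets ?M" for S by (rule MC_sets[OF Z])
  have intI: "integrable ?M (indicator {\<omega>. Z \<omega> = v} :: _ \<Rightarrow> real)" for v
    using Zs by (intro integrable_real_indicator) (auto simp: P.emeasure_eq_measure)
  have p01: "0 \<le> p v" "p v \<le> 1" for v unfolding p_def by auto
  have "ent ?M Z = (\<integral>\<omega>. (\<Sum>v\<in>V. indicator {\<omega>. Z \<omega> = v} \<omega> * (- ln (p v))) \<partial>?M)"
    unfolding ent_def
  proof (rule integral_cong_AE)
    have "(\<lambda>\<omega>. (\<lambda>v. - ln (p v)) (Z \<omega>)) \<in> borel_measurable ?M"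
      by (rule measurable_compose[OF Z[unfolded MC_def]]) simp
    then show "(\<lambda>\<omega>. - ln (measure ?M {\<omega>' \<in> space ?M. Z \<omega>' = Z \<omega>})) \<in> borel_measurable ?M"
      by (simp add: p_def)
    show "(\<lambda>\<omega>. \<Sum>v\<in>V. indicator {\<omega>. Z \<omega> = v} \<omega> * - ln (p v)) \<in> borel_measurable ?M"
      using Zs by (intro borel_measurable_sum borel_measurable_times borel_measurable_indicator borel_measurable_const) auto
    show "AE \<omega> in ?M. - ln (measure ?M {\<omega>' \<in> space ?M. Z \<omega>' = Z \<omega>}) = (\<Sum>v\<in>V. indicator {\<omega>. Z \<omega> = v} \<omega> * - ln (p v))"
      using AEV
    proof (rule AE_mp, intro AE_I2 impI)
      fix \<omega> assume zv: "Z \<omega> \<in> V"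
      have "(\<Sum>v\<in>V. indicator {\<omega>. Z \<omega> = v} \<omega> * - ln (p v)) = (\<Sum>v\<in>V. if v = Z \<omega> then - ln (p v) else 0)"
        by (intro sum.cong refl) (auto simp: indicator_def)
      also have "\<dots> = - ln (p (Z \<omega>))" using zv V by (simp add: sum.delta')
      finally show "- ln (measure ?M {\<omega>' \<in> space ?M. Z \<omega>' = Z \<omega>}) = (\<Sum>v\<in>V. indicator {\<omega>. Z \<omega> = v} \<omega> * - ln (p v))"
        by (simp add: p_def)
    qed
  qed
  also have "\<dots> = (\<Sum>v\<in>V. (\<integral>\<omega>. indicator {\<omega>. Z \<omega> = v} \<omega> * (- ln (p v)) \<partial>?M))"
    by (rule Bochner_Integration.integral_sum) (auto simp: intI)
  also have "\<dots> = (\<Sum>v\<in>V. p v * (- ln (p v)))"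
    by (simp add: p_def)
  finally have E: "ent ?M Z = (\<Sum>v\<in>V. p v * (- ln (p v)))" .
  have "(\<Sum>v\<in>V \<inter> B. p v * c) \<le> (\<Sum>v\<in>V \<inter> B. p v * (- ln (p v)))"
    using bnd p01 by (intro sum_mono term_ge) (auto simp: p_def)
  also have "\<dots> \<le> (\<Sum>v\<in>V. p v * (- ln (p v)))"
    using V p01 by (intro sum_mono2 term_nonneg) auto
  finally have I1: "(\<Sum>v\<in>V \<inter> B. p v) * c \<le> ent ?M Z" using E by (simp add: sum_distrib_right)
  have "(\<Sum>v\<in>V \<inter> B. p v) = measure ?M (\<Union>v\<in>V \<inter> B. {\<omega>. Z \<omega> = v})"
    unfolding p_def using V Zs by (intro P.finite_measure_finite_Union[symmetric]) (auto simp: disjoint_family_on_def)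
  also have "(\<Union>v\<in>V \<inter> B. {\<omega>. Z \<omega> = v}) = {\<omega>. Z \<omega> \<in> V \<inter> B}" by auto
  also have "measure ?M {\<omega>. Z \<omega> \<in> V \<inter> B} = measure ?M {\<omega>. Z \<omega> \<in> B}"
  proof (rule measure_eq_AE)
    show "AE x in ?M. (x \<in> {\<omega>. Z \<omega> \<in> V \<inter> B}) = (x \<in> {\<omega>. Z \<omega> \<in> B})"
      using AEV by eventually_elim auto
  qed (rule ZS, rule ZS)
  finally show ?thesis using I1 by (simp add: mult.commute)
qed


context rhaL begin

lemma pair_event_bound:
  fixes \<phi> :: "nat \<Rightarrow> nat list" and cs :: "nat \<Rightarrow> nat list"
  assumes inj: "inj_on \<phi> {1..K}" and len: "\<And>a. a \<in> {1..K} \<Longrightarrow> length (\<phi> a) = L"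
    and dist: "distinct (map cs [0..<m])"
    and s: "1 \<le> s" and K: "K = k (s - 1)" and mk: "m \<le> k s"
  shows "emeasure (measure_pmf (rha_level k s)) {x. \<forall>q<m. \<exists>a\<in>{1..K}. \<exists>b\<in>{1..K}. (a, b) \<in> fst x \<and> \<phi> a @ \<phi> b = cs q}
     \<le> ennreal (real ((K ^ 2 - m) choose (k s - m)) / real (K ^ 2 choose k s))"
proof -
  let ?Ev = "{x :: (nat \<times> nat) set \<times> nat. \<forall>q<m. \<exists>a\<in>{1..K}. \<exists>b\<in>{1..K}. (a, b) \<in> fst x \<and> \<phi> a @ \<phi> b = cs q}"
  define \<psi> where "\<psi> p = \<phi> (fst p) @ \<phi> (snd p)" for p
  define R where "R = {p \<in> {1..K} \<times> {1..K}. \<exists>q<m. \<psi> p = cs q}"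
  have inj\<psi>: "inj_on \<psi> ({1..K} \<times> {1..K})"
  proof (rule inj_onI)
    fix p p' assume p: "p \<in> {1..K} \<times> {1..K}" and p': "p' \<in> {1..K} \<times> {1..K}" and e: "\<psi> p = \<psi> p'"
    have l: "length (\<phi> (fst p)) = length (\<phi> (fst p'))" using p p' len by (auto simp: mem_Times_iff)
    have "\<phi> (fst p) = \<phi> (fst p') \<and> \<phi> (snd p) = \<phi> (snd p')"
      using iffD1[OF append_eq_append_conv[OF disjI1[OF l]] e[unfolded \<psi>_def]] .
    moreover have "fst p \<in> {1..K}" "snd p \<in> {1..K}" "fst p' \<in> {1..K}" "snd p' \<in> {1..K}"
      using p p' by (auto simp only: mem_Times_iff)
    ultimately have "fst p = fst p'" "snd p = snd p'" using inj_onD[OF inj] by blast+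
    then show "p = p'" by (rule prod_eqI)
  qed
  have RK: "R \<subseteq> {1..K} \<times> {1..K}" unfolding R_def by auto
  have ratio: "emeasure (measure_pmf (rha_level k s)) {x. R \<subseteq> fst x}
      = ennreal (real ((K ^ 2 - m) choose (k s - m)) / real (K ^ 2 choose k s))" if cR: "card R = m"
    using emeasure_contain[OF s RK[unfolded K] cR mk] K by simp
  show ?thesis
  proof (cases "?Ev = {}")
    case True
    have "?Ev \<subseteq> {}" using True by (rule equalityD1)
    then have "emeasure (measure_pmf (rha_level k s)) ?Ev \<le> emeasure (measure_pmf (rha_level k s)) {}"
      by (rule emeasure_mono) simp
    then show ?thesis by simp
  next
    case False
    then obtain x0 where x0: "x0 \<in> ?Ev" by blast
    have img: "\<psi> ` R = cs ` {..<m}"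
    proof
      show "\<psi> ` R \<subseteq> cs ` {..<m}" unfolding R_def by auto
      show "cs ` {..<m} \<subseteq> \<psi> ` R"
      proof
        fix c assume "c \<in> cs ` {..<m}"
        then obtain q where q: "q < m" "c = cs q" by auto
        then obtain a b where ab: "a \<in> {1..K}" "b \<in> {1..K}" "\<phi> a @ \<phi> b = cs q" using x0 by blast
        then have "(a, b) \<in> R" using q unfolding R_def \<psi>_def by auto
        moreover have "c = \<psi> (a, b)" using ab q unfolding \<psi>_def by simp
        ultimately show "c \<in> \<psi> ` R" by (rule rev_image_eqI)
      qed
    qed
    have "card R = card (\<psi> ` R)" using inj\<psi> RK by (intro card_image[symmetric]) (rule inj_on_subset)
    also have "\<dots> = card (cs ` {..<m})" by (simp only: img)
    also have "\<dots> = m"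
    proof -
      have "inj_on cs {..<m}" using dist by (simp add: distinct_map lessThan_atLeast0)
      then show ?thesis by (simp add: card_image)
    qed
    finally have cR: "card R = m" .
    have sub: "?Ev \<subseteq> {x. R \<subseteq> fst x}"
    proof (rule subsetI, rule CollectI)
      fix x assume x: "x \<in> ?Ev"
      show "R \<subseteq> fst x"
      proof
        fix p assume p: "p \<in> R"
        then obtain q where q: "q < m" "\<psi> p = cs q" and pK: "p \<in> {1..K} \<times> {1..K}" unfolding R_def by auto
        then obtain a b where ab: "a \<in> {1..K}" "b \<in> {1..K}" "(a, b) \<in> fst x" "\<phi> a @ \<phi> b = cs q" using x by blast
        have "\<psi> (a, b) = \<psi> p" using ab q unfolding \<psi>_def by simp
        moreover have "(a, b) \<in> {1..K} \<times> {1..K}" using ab by simp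
        ultimately have "(a, b) = p" using inj_onD[OF inj\<psi> _ _ pK] by blast
        then show "p \<in> fst x" using ab by simp
      qed
    qed
    have "emeasure (measure_pmf (rha_level k s)) ?Ev \<le> emeasure (measure_pmf (rha_level k s)) {x. R \<subseteq> fst x}"
      using sub by (intro emeasure_mono) auto
    then show ?thesis using ratio[OF cR] by simp
  qed
qed

lemma value_bound:
  assumes l: "1 \<le> l" "l \<le> n" and j: "1 \<le> j" and mk: "2 ^ (n - l) \<le> k l"
    and zd: "distinct (map (chunk l z) [0..<2 ^ (n - l)])"
  shows "emeasure (rha_space k) {\<omega>. rha_block k \<omega> n j = z}
    \<le> ennreal (real ((k (l - 1) ^ 2 - 2 ^ (n - l)) choose (k l - 2 ^ (n - l))) / real (k (l - 1) ^ 2 choose k l))"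
proof -
  let ?m = "2 ^ (n - l) :: nat"
  let ?K = "k (l - 1)"
  let ?r = "ennreal (real ((?K ^ 2 - ?m) choose (k l - ?m)) / real (?K ^ 2 choose k l))"
  define G where "G x ys \<longleftrightarrow> (\<forall>q<?m. \<exists>a\<in>{1..?K}. \<exists>b\<in>{1..?K}. (a, b) \<in> fst x \<and> ys ! a @ ys ! b = chunk l z q)"
    for x :: "(nat \<times> nat) set \<times> nat" and ys :: "nat list list"
  define Ez where "Ez = {\<omega>. \<forall>q<?m. \<exists>a\<in>{1..?K}. \<exists>b\<in>{1..?K}. (a, b) \<in> fst (\<omega> l) \<and>
      rha_Y k \<omega> (l - 1) a @ rha_Y k \<omega> (l - 1) b = chunk l z q}"
  have Ez_alt: "Ez = {\<omega>. G (\<omega> l) (map (\<lambda>a. rha_Y k \<omega> (l - 1) a) [0..<?K + 1])}"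
  proof -
    have "map (\<lambda>a. rha_Y k \<omega> (l - 1) a) [0..<?K + 1] ! a = rha_Y k \<omega> (l - 1) a" if "a \<in> {1..?K}" for a \<omega>
      using that by (simp del: upt_Suc)
    then show ?thesis unfolding Ez_def G_def by auto
  qed
  have Ezm: "Ez \<in> sets (rha_space k)"
  proof -
    have "MC k (\<lambda>\<omega>. G (\<omega> l) (map (\<lambda>a. rha_Y k \<omega> (l - 1) a) [0..<?K + 1]))"
      by (rule MC_lvl2) (rule MC_map, rule MC_Y)
    then show ?thesis unfolding Ez_alt by (rule MC_pred_sets)
  qed
  have AEsub: "AE \<omega> in rha_space k. \<omega> \<in> {\<omega>. rha_block k \<omega> n j = z} \<longrightarrow> \<omega> \<in> Ez"
    using AE_good
  proof (rule AE_mp, intro AE_I2 impI)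
    fix \<omega> assume g: "good k \<omega>" and bz: "\<omega> \<in> {\<omega>. rha_block k \<omega> n j = z}"
    obtain a where a: "2 ^ a \<le> j" "j < 2 ^ Suc a" using ex_power_ivl1[of 2 j] j by auto
    define i where "i = pth k \<omega> n a (snd (\<omega> (n + a))) (j - 2 ^ a)"
    have Ci: "snd (\<omega> (n + a)) \<in> {1..k (n + a)}" using g by (simp add: good_def goodlvl_def)
    have i: "i \<in> {1..k n}" unfolding i_def using a by (intro pth_range[OF g Ci]) simp
    have zY: "z = rha_Y k \<omega> n i" using bz block_eq[OF a, of k \<omega> n] by (simp add: i_def)
    have nl: "n = l + (n - l)" using l by simp
    show "\<omega> \<in> Ez" unfolding Ez_def
    proof (intro CollectI allI impI)
      fix q assume q: "q < ?m"
      define p where "p = pth k \<omega> l (n - l) i q"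
      have p: "p \<in> {1..k l}" unfolding p_def using i nl by (intro pth_range[OF g _ q]) simp
      have cq: "chunk l z q = rha_Y k \<omega> l p"
        unfolding zY chunk_def p_def using sub_Y[OF q, of l k \<omega> i] nl by simp
      have gl: "goodlvl k l (\<omega> l)" using g by (simp add: good_def)
      have LRin: "rha_LR k \<omega> l p \<in> fst (\<omega> l)"
        using LR_bij[OF gl l(1)] p by (auto simp: bij_betw_def rha_LR_LRl)
      have LRK: "rha_LR k \<omega> l p \<in> {1..?K} \<times> {1..?K}"
        using LR_in[OF gl l(1) p] by (simp add: rha_LR_LRl)
      obtain l' where l': "l = Suc l'" using l(1) by (cases l) auto
      have "rha_Y k \<omega> l p = rha_Y k \<omega> (l - 1) (fst (rha_LR k \<omega> l p)) @ rha_Y k \<omega> (l - 1) (snd (rha_LR k \<omega> l p))"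
        unfolding l' by simp
      then show "\<exists>a\<in>{1..?K}. \<exists>b\<in>{1..?K}. (a, b) \<in> fst (\<omega> l) \<and>
          rha_Y k \<omega> (l - 1) a @ rha_Y k \<omega> (l - 1) b = chunk l z q"
        using LRin LRK cq by (intro bexI[of _ "fst (rha_LR k \<omega> l p)"] bexI[of _ "snd (rha_LR k \<omega> l p)"])
          (auto simp: mem_Times_iff)
    qed
  qed
  have "emeasure (rha_space k) {\<omega>. rha_block k \<omega> n j = z} \<le> emeasure (rha_space k) Ez"
    by (rule emeasure_mono_AE[OF AEsub Ezm])
  also have "\<dots> = (\<integral>\<^sup>+\<omega>. emeasure (measure_pmf (rha_level k l)) {x. fun_upd \<omega> l x \<in> Ez} \<partial>rha_space k)"
    by (rule resample_set[OF Ezm])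
  also have "\<dots> \<le> (\<integral>\<^sup>+\<omega>. ?r \<partial>rha_space k)"
  proof (rule nn_integral_mono_AE)
    show "AE \<omega> in rha_space k. emeasure (measure_pmf (rha_level k l)) {x. fun_upd \<omega> l x \<in> Ez} \<le> ?r"
      using AE_good
    proof (rule AE_mp, intro AE_I2 impI)
      fix \<omega> assume g: "good k \<omega>"
      have Yc: "rha_Y k (fun_upd \<omega> l x) (l - 1) a = rha_Y k \<omega> (l - 1) a" for x a
        using l by (intro Y_cong) auto
      have "{x. fun_upd \<omega> l x \<in> Ez} = {x :: (nat \<times> nat) set \<times> nat. \<forall>q<?m. \<exists>a\<in>{1..?K}. \<exists>b\<in>{1..?K}. (a, b) \<in> fst x \<and>
          rha_Y k \<omega> (l - 1) a @ rha_Y k \<omega> (l - 1) b = chunk l z q}"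
        unfolding Ez_def mem_Collect_eq Yc fun_upd_same ..
      moreover have "emeasure (measure_pmf (rha_level k l)) {x :: (nat \<times> nat) set \<times> nat. \<forall>q<?m. \<exists>a\<in>{1..?K}. \<exists>b\<in>{1..?K}. (a, b) \<in> fst x \<and>
          rha_Y k \<omega> (l - 1) a @ rha_Y k \<omega> (l - 1) b = chunk l z q} \<le> ?r"
      proof (rule pair_event_bound[OF _ _ zd l(1) refl mk])
        show "inj_on (\<lambda>a. rha_Y k \<omega> (l - 1) a) {1..?K}" using Y_props[OF g] by blast
        show "\<And>a. a \<in> {1..?K} \<Longrightarrow> length (rha_Y k \<omega> (l - 1) a) = 2 ^ (l - 1)" by simp
      qed
      ultimately show "emeasure (measure_pmf (rha_level k l)) {x. fun_upd \<omega> l x \<in> Ez} \<le> ?r" by simp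
    qed
  qed
  also have "\<dots> = ?r"
    using prob_space.emeasure_space_1[OF prob_space_rha[of k]] by simp
  finally show ?thesis .
qed

end


context rhaL begin

lemma main_bound:
  assumes l: "1 \<le> l" "l \<le> n" and j: "1 \<le> j" and mk: "2 ^ (n - l) \<le> k l"
  shows "(ln (real ((k (l - 1))\<^sup>2 choose k l))
               - ln (real (((k (l - 1))\<^sup>2 - 2 ^ (n - l)) choose (k l - 2 ^ (n - l)))))
             * measure (rha_space k) (rha_A k n l) \<le> ent (rha_space k) (\<lambda>\<omega>. rha_block k \<omega> n j)"
proof -
  interpret P: prob_space "rha_space k" by (rule prob_space_rha)
  let ?m = "2 ^ (n - l) :: nat"
  let ?N = "(k (l - 1))\<^sup>2"
  define a where "a = real (?N choose k l)"
  define b where "b = real ((?N - ?m) choose (k l - ?m))"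
  define c where "c = ln a - ln b"
  define D where "D z \<longleftrightarrow> distinct (map (chunk l z) [0..<?m])" for z
  define V where "V = {xs. set xs \<subseteq> {1..k 0} \<and> length xs = 2 ^ n}"
  have kN: "k l \<le> ?N" using kgrowth l by auto
  have ap: "0 < a" unfolding a_def using kN by simp
  have bp: "0 < b" unfolding b_def using kN mk by simp
  have ec: "exp (- c) = b / a" unfolding c_def using ap bp by (simp add: exp_diff)
  have Zm: "MC k (\<lambda>\<omega>. rha_block k \<omega> n j)" by (rule MC_block)
  have fV: "finite V" unfolding V_def by (rule finite_lists_length_eq) simp
  have AEV: "AE \<omega> in rha_space k. rha_block k \<omega> n j \<in> V"
    using AE_good
  proof (rule AE_mp, intro AE_I2 impI)
    fix \<omega> assume g: "good k \<omega>"
    obtain e where e: "2 ^ e \<le> j" "j < 2 ^ Suc e" using ex_power_ivl1[of 2 j] j by auto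
    define i where "i = pth k \<omega> n e (snd (\<omega> (n + e))) (j - 2 ^ e)"
    have Ci: "snd (\<omega> (n + e)) \<in> {1..k (n + e)}" using g by (simp add: good_def goodlvl_def)
    have i: "i \<in> {1..k n}" unfolding i_def using e by (intro pth_range[OF g Ci]) simp
    have "rha_block k \<omega> n j = rha_Y k \<omega> n i" using block_eq[OF e, of k \<omega> n] by (simp add: i_def)
    then show "rha_block k \<omega> n j \<in> V" using Y_props[OF g, of n] i unfolding V_def by auto
  qed
  have bnd: "measure (rha_space k) {\<omega>. rha_block k \<omega> n j = v} \<le> exp (- c)" if v: "v \<in> {z. D z}" for v
  proof -
    have "emeasure (rha_space k) {\<omega>. rha_block k \<omega> n j = v} \<le> ennreal (b / a)"
      using value_bound[OF l j mk, of v] v unfolding D_def a_def b_def by simp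
    then show ?thesis unfolding ec using ap bp
      by (simp add: P.emeasure_eq_measure ennreal_le_iff)
  qed
  have "c * measure (rha_space k) {\<omega>. rha_block k \<omega> n j \<in> {z. D z}} \<le> ent (rha_space k) (\<lambda>\<omega>. rha_block k \<omega> n j)"
    by (rule ent_lower[OF Zm fV AEV bnd])
  moreover have "measure (rha_space k) {\<omega>. rha_block k \<omega> n j \<in> {z. D z}} = measure (rha_space k) (rha_A k n l)"
  proof -
    have "emeasure (rha_space k) {\<omega>. D (rha_block k \<omega> n j)} = emeasure (rha_space k) {\<omega>. D (rha_block k \<omega> n 1)}"
      by (rule block_dist_eq[OF j])
    then have "measure (rha_space k) {\<omega>. D (rha_block k \<omega> n j)} = measure (rha_space k) {\<omega>. D (rha_block k \<omega> n 1)}"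
      by (simp add: measure_def)
    also have "{\<omega>. D (rha_block k \<omega> n 1)} = rha_A k n l" using A_eq[OF l(2)] unfolding D_def by simp
    finally show ?thesis by simp
  qed
  ultimately show ?thesis unfolding c_def a_def b_def by simp
qed

end

theorem proposition11:
  fixes k :: "nat \<Rightarrow> nat" and n j :: nat
  assumes kpos: "\<forall>m. 0 < k m"
    and kgrowth: "\<forall>m\<ge>1. k (m - 1) \<le> k m \<and> k m \<le> (k (m - 1))\<^sup>2"
    and n: "1 \<le> n" and j: "1 \<le> j"
  shows "ent (rha_space k) (\<lambda>\<omega>. rha_block k \<omega> n j) \<ge>
    Max ((\<lambda>l. (ln (real ((k (l - 1))\<^sup>2 choose k l))
               - ln (real (((k (l - 1))\<^sup>2 - 2 ^ (n - l)) choose (k l - 2 ^ (n - l)))))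
             * measure (rha_space k) (rha_A k n l))
         ` {l \<in> {1..n}. 2 ^ (n - l) \<le> k l})"
proof -
  interpret rhaL k using kpos kgrowth by unfold_locales
  let ?S = "{l \<in> {1..n}. 2 ^ (n - l) \<le> k l}"
  let ?f = "\<lambda>l. (ln (real ((k (l - 1))\<^sup>2 choose k l))
               - ln (real (((k (l - 1))\<^sup>2 - 2 ^ (n - l)) choose (k l - 2 ^ (n - l)))))
             * measure (rha_space k) (rha_A k n l)"
  have fin: "finite (?f ` ?S)" by simp
  have "n \<in> ?S" using n kpos by (simp add: Suc_le_eq)
  then have ne: "?f ` ?S \<noteq> {}" by blast
  have "Max (?f ` ?S) \<in> ?f ` ?S" using fin ne by (rule Max_in)
  then obtain l where lS: "l \<in> ?S" and lmax: "Max (?f ` ?S) = ?f l" by auto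
  have "?f l \<le> ent (rha_space k) (\<lambda>\<omega>. rha_block k \<omega> n j)"
    using lS j by (intro main_bound) auto
  then show ?thesis using lmax by simp
qed

end
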